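(* Let $K$ be a field, $v:K^*\to\mathbb Z$ a discrete non-archimedean valuation and $T_v$ the Bruhat–Tits tree of $(K,v)$, with its natural action of $GL(2,K)$. Let $\Gamma$ be a finitely generated group, $\chi\in E^1(\Gamma,K)$, and let $\theta:\Gamma\to K$ be a 1-cocycle for $\chi$ whose class in $H^1(\Gamma,\chi)$ is nonzero. Define $\rho:\Gamma\to GL(2,K)$ by $\rho(g)=\begin{pmatrix}\chi(g)&\theta(g)\\0&1\end{pmatrix}$. If $v\circ\chi\in \mathrm{Hom}(\Gamma,\mathbb Z)$ is nonzero, then the action of $\Gamma$ on $T_v$ via $\rho$ is exceptional.
   Context: $E^1(\Gamma,K)$ is the set of characters $\chi:\Gamma\to K^*$ with $H^1(\Gamma,\chi)\ne 0$, where a 1-cocycle is $\theta:\Gamma\to K$ with $\theta(gh)=\theta(g)+\chi(g)\theta(h)$ and coboundaries are $g\mapsto\mu(\chi(g)-1)$. The Bruhat–Tits tree $T_v$ has as vertices homothety classes of free rank-2 $O_v$-submodules (lattices) of $K^2$ spanning $K^2$, where $O_v=\{v\ge0\}$, two vertices being adjacent when representatives $\Lambda\supset\Lambda'$ satisfy $\Lambda/\Lambda'\cong O_v/\mathfrak m_v$; its boundary is $P^1(\hat K_v)$. For a simplicial tree $T$, rays are isometric maps $r:[a,\infty)\to T$, two rays are equivalent if they eventually coincide up to reparametrization by translation, and $\partial T$ is the set of classes. The Busemann function of $r$ is $b_r(x)=\lim_{t\to\infty}(d(x,r(t))-t)$. If $\Gamma$ acts on $T$ fixing $\alpha\in\partial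 T$ represented by $r$, the Busemann cocycle is the homomorphism $\omega_\alpha(g)=b_r\circ g-b_r\in\mathbb Z$. The action is exceptional if $\Gamma$ fixes exactly one point of $\partial T$ and the associated Busemann cocycle is nontrivial. *)

theory Defs
  imports Complex_Main "HOL-Algebra.Generated_Groups"
begin

text \<open>A (normalized) discrete non-archimedean valuation v : K* -> Z; values at 0 are irrelevant.\<close>
definition discrete_valuation :: "('k::field \<Rightarrow> int) \<Rightarrow> bool" where
  "discrete_valuation v \<longleftrightarrow>
     (\<forall>x y. x \<noteq> 0 \<and> y \<noteq> 0 \<longrightarrow> v (x * y) = v x + v y) \<and>
     (\<forall>x y. x \<noteq> 0 \<and> y \<noteq> 0 \<and> x + y \<noteq> 0 \<longrightarrow> v (x + y) \<ge> min (v x) (v y)) \<and>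
     v ` (UNIV - {0}) = UNIV"

definition val_ring :: "('k::field \<Rightarrow> int) \<Rightarrow> 'k set" where
  "val_ring v = {x. x = 0 \<or> v x \<ge> 0}"

definition max_ideal :: "('k::field \<Rightarrow> int) \<Rightarrow> 'k set" where
  "max_ideal v = {x. x = 0 \<or> v x > 0}"

definition padd :: "'k::field \<times> 'k \<Rightarrow> 'k \<times> 'k \<Rightarrow> 'k \<times> 'k" where
  "padd p q = (fst p + fst q, snd p + snd q)"

definition psmul :: "'k::field \<Rightarrow> 'k \<times> 'k \<Rightarrow> 'k \<times> 'k" where
  "psmul c p = (c * fst p, c * snd p)"

text \<open>A 2x2 matrix (a,b,c,d) = [[a,b],[c,d]] acting on column vectors.\<close>
type_synonym 'k mat2 = "'k \<times> 'k \<times> 'k \<times> 'k"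

definition mat_apply :: "'k::field mat2 \<Rightarrow> 'k \<times> 'k \<Rightarrow> 'k \<times> 'k" where
  "mat_apply M p = (case M of (a, b, c, d) \<Rightarrow>
      (a * fst p + b * snd p, c * fst p + d * snd p))"

text \<open>Free rank-2 O_v-submodule of K^2 spanning K^2: the O_v-span of a K-basis.\<close>
definition bt_lattice :: "('k::field \<Rightarrow> int) \<Rightarrow> ('k \<times> 'k) set \<Rightarrow> bool" where
  "bt_lattice v L \<longleftrightarrow> (\<exists>e1 e2. fst e1 * snd e2 - snd e1 * fst e2 \<noteq> 0 \<and>
      L = {padd (psmul a e1) (psmul b e2) | a b. a \<in> val_ring v \<and> b \<in> val_ring v})"

definition homothety_class :: "('k::field \<times> 'k) set \<Rightarrow> ('k \<times> 'k) set set" where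
  "homothety_class L = {psmul c ` L | c. c \<noteq> 0}"

definition bt_vertices :: "('k::field \<Rightarrow> int) \<Rightarrow> ('k \<times> 'k) set set set" where
  "bt_vertices v = {homothety_class L | L. bt_lattice v L}"

text \<open>\<open>L/L' \<cong> O_v/m_v\<close> as O_v-modules (for L' \<subseteq> L): there is a surjective O_v-linear map
  L -> O_v/m_v with kernel L'; the map is given by a lift f : L -> O_v.\<close>
definition quot_residue :: "('k::field \<Rightarrow> int) \<Rightarrow> ('k \<times> 'k) set \<Rightarrow> ('k \<times> 'k) set \<Rightarrow> bool" where
  "quot_residue v L L' \<longleftrightarrow> (\<exists>f. (\<forall>x\<in>L. f x \<in> val_ring v) \<and>
      (\<forall>x\<in>L. \<forall>y\<in>L. f (padd x y) - f x - f y \<in> max_ideal v) \<and>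
      (\<forall>a\<in>val_ring v. \<forall>x\<in>L. f (psmul a x) - a * f x \<in> max_ideal v) \<and>
      (\<forall>c\<in>val_ring v. \<exists>x\<in>L. f x - c \<in> max_ideal v) \<and>
      L' = {x\<in>L. f x \<in> max_ideal v})"

definition bt_adj :: "('k::field \<Rightarrow> int) \<Rightarrow> ('k \<times> 'k) set set \<Rightarrow> ('k \<times> 'k) set set \<Rightarrow> bool" where
  "bt_adj v X Y \<longleftrightarrow> X \<in> bt_vertices v \<and> Y \<in> bt_vertices v \<and>
     ((\<exists>L\<in>X. \<exists>L'\<in>Y. L' \<subseteq> L \<and> quot_residue v L L') \<or>
      (\<exists>L\<in>Y. \<exists>L'\<in>X. L' \<subseteq> L \<and> quot_residue v L L'))"

definition gl_vertex_act :: "'k::field mat2 \<Rightarrow> ('k \<times> 'k) set set \<Rightarrow> ('k \<times> 'k) set set" where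
  "gl_vertex_act M X = (\<lambda>L. mat_apply M ` L) ` X"

definition is_walk :: "('a \<Rightarrow> 'a \<Rightarrow> bool) \<Rightarrow> 'a list \<Rightarrow> bool" where
  "is_walk adj xs \<longleftrightarrow> xs \<noteq> [] \<and> (\<forall>i. Suc i < length xs \<longrightarrow> adj (xs ! i) (xs ! Suc i))"

definition gdist :: "('a \<Rightarrow> 'a \<Rightarrow> bool) \<Rightarrow> 'a \<Rightarrow> 'a \<Rightarrow> nat" where
  "gdist adj x y = (LEAST n. \<exists>xs. is_walk adj xs \<and> hd xs = x \<and> last xs = y \<and> length xs = Suc n)"

definition is_ray :: "'a set \<Rightarrow> ('a \<Rightarrow> 'a \<Rightarrow> bool) \<Rightarrow> (nat \<Rightarrow> 'a) \<Rightarrow> bool" where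
  "is_ray V adj r \<longleftrightarrow> (\<forall>n. r n \<in> V) \<and>
     (\<forall>m n. int (gdist adj (r m) (r n)) = \<bar>int m - int n\<bar>)"

definition ray_equiv :: "(nat \<Rightarrow> 'a) \<Rightarrow> (nat \<Rightarrow> 'a) \<Rightarrow> bool" where
  "ray_equiv r r' \<longleftrightarrow> (\<exists>a b. \<forall>n. r (n + a) = r' (n + b))"

definition ray_class :: "'a set \<Rightarrow> ('a \<Rightarrow> 'a \<Rightarrow> bool) \<Rightarrow> (nat \<Rightarrow> 'a) \<Rightarrow> (nat \<Rightarrow> 'a) set" where
  "ray_class V adj r = {r'. is_ray V adj r' \<and> ray_equiv r r'}"

definition tree_boundary :: "'a set \<Rightarrow> ('a \<Rightarrow> 'a \<Rightarrow> bool) \<Rightarrow> (nat \<Rightarrow> 'a) set set" where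
  "tree_boundary V adj = {ray_class V adj r | r. is_ray V adj r}"

definition boundary_act :: "('a \<Rightarrow> 'a) \<Rightarrow> (nat \<Rightarrow> 'a) set \<Rightarrow> (nat \<Rightarrow> 'a) set" where
  "boundary_act f \<alpha> = {f \<circ> r | r. r \<in> \<alpha>}"

definition busemann :: "('a \<Rightarrow> 'a \<Rightarrow> bool) \<Rightarrow> (nat \<Rightarrow> 'a) \<Rightarrow> 'a \<Rightarrow> real" where
  "busemann adj r x = lim (\<lambda>n. real (gdist adj x (r n)) - real n)"

definition busemann_cocycle ::
  "'a set \<Rightarrow> ('a \<Rightarrow> 'a \<Rightarrow> bool) \<Rightarrow> ('g \<Rightarrow> 'a \<Rightarrow> 'a) \<Rightarrow> (nat \<Rightarrow> 'a) \<Rightarrow> 'g \<Rightarrow> 'a \<Rightarrow> real" where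
  "busemann_cocycle V adj act r g = (\<lambda>x\<in>V. busemann adj r (act g x) - busemann adj r x)"

definition exceptional_action ::
  "('g, 'b) monoid_scheme \<Rightarrow> 'a set \<Rightarrow> ('a \<Rightarrow> 'a \<Rightarrow> bool) \<Rightarrow> ('g \<Rightarrow> 'a \<Rightarrow> 'a) \<Rightarrow> bool" where
  "exceptional_action G V adj act \<longleftrightarrow>
     (\<exists>!\<alpha>. \<alpha> \<in> tree_boundary V adj \<and> (\<forall>g\<in>carrier G. boundary_act (act g) \<alpha> = \<alpha>)) \<and>
     (\<forall>\<alpha> r. \<alpha> \<in> tree_boundary V adj \<and> (\<forall>g\<in>carrier G. boundary_act (act g) \<alpha> = \<alpha>) \<and> r \<in> \<alpha>
        \<longrightarrow> (\<exists>g\<in>carrier G. busemann_cocycle V adj act r g \<noteq> (\<lambda>x\<in>V. 0)))"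

definition character :: "('g, 'b) monoid_scheme \<Rightarrow> ('g \<Rightarrow> 'k::field) \<Rightarrow> bool" where
  "character G \<chi> \<longleftrightarrow> (\<forall>g\<in>carrier G. \<chi> g \<noteq> 0) \<and>
     (\<forall>g\<in>carrier G. \<forall>h\<in>carrier G. \<chi> (g \<otimes>\<^bsub>G\<^esub> h) = \<chi> g * \<chi> h)"

definition cocycle1 :: "('g, 'b) monoid_scheme \<Rightarrow> ('g \<Rightarrow> 'k::field) \<Rightarrow> ('g \<Rightarrow> 'k) \<Rightarrow> bool" where
  "cocycle1 G \<chi> \<theta> \<longleftrightarrow>
     (\<forall>g\<in>carrier G. \<forall>h\<in>carrier G. \<theta> (g \<otimes>\<^bsub>G\<^esub> h) = \<theta> g + \<chi> g * \<theta> h)"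

definition coboundary1 :: "('g, 'b) monoid_scheme \<Rightarrow> ('g \<Rightarrow> 'k::field) \<Rightarrow> ('g \<Rightarrow> 'k) \<Rightarrow> bool" where
  "coboundary1 G \<chi> \<theta> \<longleftrightarrow> (\<exists>\<mu>. \<forall>g\<in>carrier G. \<theta> g = \<mu> * (\<chi> g - 1))"

definition E1 :: "('g, 'b) monoid_scheme \<Rightarrow> ('g \<Rightarrow> 'k::field) set" where
  "E1 G = {\<chi>. character G \<chi> \<and> (\<exists>\<theta>. cocycle1 G \<chi> \<theta> \<and> \<not> coboundary1 G \<chi> \<theta>)}"

definition finitely_generated_group :: "('g, 'b) monoid_scheme \<Rightarrow> bool" where
  "finitely_generated_group G \<longleftrightarrow> group G \<and>
     (\<exists>S. finite S \<and> S \<subseteq> carrier G \<and> generate G S = carrier G)"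

definition affine_rep :: "('g \<Rightarrow> 'k::field) \<Rightarrow> ('g \<Rightarrow> 'k) \<Rightarrow> 'g \<Rightarrow> 'k mat2" where
  "affine_rep \<chi> \<theta> g = (\<chi> g, \<theta> g, 0, 1)"

end

theory Submission
  imports Defs
begin


locale dval =
  fixes v :: "'k::field \<Rightarrow> int"
  assumes dv: "discrete_valuation v"
begin

lemma vmult: "x \<noteq> 0 \<Longrightarrow> y \<noteq> 0 \<Longrightarrow> v (x * y) = v x + v y"
  using dv unfolding discrete_valuation_def by blast

lemma vadd_raw: "x \<noteq> 0 \<Longrightarrow> y \<noteq> 0 \<Longrightarrow> x + y \<noteq> 0 \<Longrightarrow> v (x + y) \<ge> min (v x) (v y)"
  using dv unfolding discrete_valuation_def by blast

lemma vsurj: "\<exists>x. x \<noteq> 0 \<and> v x = n"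
proof -
  have "n \<in> v ` (UNIV - {0})" using dv unfolding discrete_valuation_def by auto
  then show ?thesis by auto
qed

lemma v1[simp]: "v 1 = 0"
  using vmult[of 1 1] by simp

lemma vinv: "x \<noteq> 0 \<Longrightarrow> v (inverse x) = - v x"
  using vmult[of x "inverse x"] by simp

lemma vdiv: "x \<noteq> 0 \<Longrightarrow> y \<noteq> 0 \<Longrightarrow> v (x / y) = v x - v y"
  by (simp add: divide_inverse vmult vinv)

lemma vm1: "v (-1) = 0"
  using vmult[of "-1" "-1"] by simp

lemma vminus[simp]: "v (- x) = v x"
proof (cases "x = 0")
  case True then show ?thesis by simp
next
  case False
  then show ?thesis using vmult[of "-1" x] vm1 by simp
qed

definition dvp :: "int \<Rightarrow> 'k \<Rightarrow> bool" where
  "dvp n x \<longleftrightarrow> x = 0 \<or> n \<le> v x"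

lemma dvp0[simp]: "dvp n 0" by (simp add: dvp_def)

lemma dvp_add: "dvp n x \<Longrightarrow> dvp n y \<Longrightarrow> dvp n (x + y)"
  unfolding dvp_def using vadd_raw[of x y] by fastforce

lemma dvp_uminus[simp]: "dvp n (- x) = dvp n x"
  by (simp add: dvp_def)

lemma dvp_diff: "dvp n x \<Longrightarrow> dvp n y \<Longrightarrow> dvp n (x - y)"
  using dvp_add[of n x "-y"] by simp

lemma dvp_mono: "dvp n x \<Longrightarrow> m \<le> n \<Longrightarrow> dvp m x"
  by (auto simp: dvp_def)

lemma dvp_mult: "dvp n x \<Longrightarrow> dvp m y \<Longrightarrow> dvp (n + m) (x * y)"
  by (cases "x = 0"; cases "y = 0") (auto simp: dvp_def vmult)

lemma dvp_mult_iff: "c \<noteq> 0 \<Longrightarrow> dvp n (c * x) \<longleftrightarrow> dvp (n - v c) x"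
  by (cases "x = 0") (auto simp: dvp_def vmult)

lemma dvp_div_iff: "c \<noteq> 0 \<Longrightarrow> dvp n (x / c) \<longleftrightarrow> dvp (n + v c) x"
  by (cases "x = 0") (auto simp: dvp_def vdiv)

lemma dvp_1[simp]: "dvp n 1 \<longleftrightarrow> n \<le> 0"
  by (simp add: dvp_def)

lemma dvp_all: "(\<And>n. dvp n x) \<Longrightarrow> x = 0"
proof -
  assume a: "\<And>n. dvp n x"
  have "dvp (v x + 1) x" by (rule a)
  then show "x = 0" by (simp add: dvp_def)
qed

lemma dvp_v: "dvp (v x) x"
  by (simp add: dvp_def)

lemma val_ring_dvp: "val_ring v = {x. dvp 0 x}"
  by (auto simp: val_ring_def dvp_def)

lemma max_ideal_dvp: "max_ideal v = {x. dvp 1 x}"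
  by (auto simp: max_ideal_def dvp_def)

definition unif :: 'k where "unif = (SOME p. p \<noteq> 0 \<and> v p = 1)"

lemma unif: "unif \<noteq> 0" "v unif = 1"
  using someI_ex[OF vsurj[of 1]] unfolding unif_def by auto

lemma v_pow: "x \<noteq> 0 \<Longrightarrow> v (x ^ k) = int k * v x"
  by (induction k) (auto simp: vmult algebra_simps)

definition P :: "int \<Rightarrow> 'k" where "P n = unif powi n"

lemma P_nz[simp]: "P n \<noteq> 0"
  by (simp add: P_def unif)

lemma vP[simp]: "v (P n) = n"
proof (cases "n \<ge> 0")
  case True
  then have "P n = unif ^ nat n" by (simp add: P_def power_int_def)
  then show ?thesis using True unif by (simp add: v_pow)
next
  case False
  then have "P n = inverse (unif ^ nat (- n))" by (simp add: P_def power_int_def power_inverse)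
  then show ?thesis using False unif by (simp add: v_pow vinv)
qed

lemma P_add: "P (m + n) = P m * P n"
  by (simp add: P_def power_int_add unif)

lemma P_0[simp]: "P 0 = 1" by (simp add: P_def)

lemma dvp_P: "dvp n (P n)" by (simp add: dvp_def)

lemma dvp_unit_mult: "v u = 0 \<Longrightarrow> u \<noteq> 0 \<Longrightarrow> dvp n (u * x) \<longleftrightarrow> dvp n x"
  by (simp add: dvp_mult_iff)

end


context dval begin

definition sp :: "'k \<times> 'k \<Rightarrow> 'k \<times> 'k \<Rightarrow> ('k \<times> 'k) set" where
  "sp e1 e2 = {padd (psmul a e1) (psmul b e2) | a b. a \<in> val_ring v \<and> b \<in> val_ring v}"

definition lam :: "int \<Rightarrow> 'k \<Rightarrow> ('k \<times> 'k) set" where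
  "lam n z = sp (P n, 0) (z, 1)"

lemma mem_lam: "p \<in> lam n z \<longleftrightarrow> dvp 0 (snd p) \<and> dvp n (fst p - snd p * z)"
proof
  assume "p \<in> lam n z"
  then obtain a b where ab: "dvp 0 a" "dvp 0 b" "p = (a * P n + b * z, b)"
    by (auto simp: lam_def sp_def padd_def psmul_def val_ring_dvp)
  have "dvp (0 + n) (a * P n)" using ab(1) dvp_P by (rule dvp_mult)
  then show "dvp 0 (snd p) \<and> dvp n (fst p - snd p * z)" using ab by simp
next
  assume h: "dvp 0 (snd p) \<and> dvp n (fst p - snd p * z)"
  define a where "a = (fst p - snd p * z) / P n"
  have a: "dvp 0 a" using h by (simp add: a_def dvp_div_iff)
  have "p = padd (psmul a (P n, 0)) (psmul (snd p) (z, 1))"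
    by (cases p) (simp add: a_def padd_def psmul_def)
  then show "p \<in> lam n z" using a h
    unfolding lam_def sp_def val_ring_dvp by blast
qed

lemma mem_lam': "(x, y) \<in> lam n z \<longleftrightarrow> dvp 0 y \<and> dvp n (x - y * z)"
  by (simp add: mem_lam)

lemma mem_sc: "c \<noteq> 0 \<Longrightarrow> p \<in> psmul c ` S \<longleftrightarrow> psmul (inverse c) p \<in> S"
proof
  assume c: "c \<noteq> 0" "p \<in> psmul c ` S"
  then obtain q where "q \<in> S" "p = psmul c q" by auto
  moreover have "psmul (inverse c) (psmul c q) = q" using c(1) by (cases q) (simp add: psmul_def field_simps)
  ultimately show "psmul (inverse c) p \<in> S" by simp
next
  assume c: "c \<noteq> 0" "psmul (inverse c) p \<in> S"
  have "p = psmul c (psmul (inverse c) p)" using c by (cases p) (simp add: psmul_def field_simps)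
  then show "p \<in> psmul c ` S" using c by blast
qed

lemma psmul_1[simp]: "psmul 1 p = p" by (simp add: psmul_def)

lemma image_psmul_1[simp]: "psmul 1 ` S = S" by simp

lemma sc_sc: "psmul c ` psmul d ` S = psmul (c * d) ` S"
proof -
  have "\<And>x. psmul c (psmul d x) = psmul (c * d) x" by (simp add: psmul_def algebra_simps)
  then show ?thesis by (simp add: image_image)
qed

lemma hc_sc: "c \<noteq> 0 \<Longrightarrow> homothety_class (psmul c ` L) = homothety_class L"
proof -
  assume c: "c \<noteq> 0"
  show ?thesis
  proof
    show "homothety_class (psmul c ` L) \<subseteq> homothety_class L"
    proof
      fix M assume "M \<in> homothety_class (psmul c ` L)"
      then obtain d where d: "d \<noteq> 0" "M = psmul d ` psmul c ` L"
        unfolding homothety_class_def by (elim CollectE exE conjE) (rule that)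
      then have "M = psmul (d * c) ` L" "d * c \<noteq> 0" using c by (simp_all add: sc_sc)
      then show "M \<in> homothety_class L" unfolding homothety_class_def by blast
    qed
  next
    show "homothety_class L \<subseteq> homothety_class (psmul c ` L)"
    proof
      fix M assume "M \<in> homothety_class L"
      then obtain d where d: "d \<noteq> 0" "M = psmul d ` L"
        unfolding homothety_class_def by (elim CollectE exE conjE) (rule that)
      then have "M = psmul (d / c) ` psmul c ` L" using c by (simp add: sc_sc)
      moreover have "d / c \<noteq> 0" using c d by simp
      ultimately show "M \<in> homothety_class (psmul c ` L)"
        unfolding homothety_class_def by blast
    qed
  qed
qed

lemma lam_eq: "dvp n (z - z') \<Longrightarrow> lam n z = lam n z'"
proof -
  assume h: "dvp n (z - z')"
  have "dvp n (x - y * z) \<longleftrightarrow> dvp n (x - y * z')" if "dvp 0 y" for x y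
  proof -
    have d: "dvp n (y * (z - z'))" using dvp_mult[OF that h] by simp
    have e1: "x - y * z' = (x - y * z) + y * (z - z')" by (simp add: algebra_simps)
    have e2: "x - y * z = (x - y * z') - y * (z - z')" by (simp add: algebra_simps)
    show ?thesis
    proof
      assume "dvp n (x - y * z)" then show "dvp n (x - y * z')"
        using d dvp_add[of n "x - y * z" "y * (z - z')"] by (simp only: e1)
    next
      assume "dvp n (x - y * z')" then show "dvp n (x - y * z)"
        using d dvp_diff[of n "x - y * z'" "y * (z - z')"] by (simp only: e2)
    qed
  qed
  then show ?thesis by (auto simp: mem_lam)
qed

lemma sc_lam_unit: "u \<noteq> 0 \<Longrightarrow> v u = 0 \<Longrightarrow> psmul u ` lam n z = lam n z"
proof -
  assume u: "u \<noteq> 0" "v u = 0"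
  have vi: "v (inverse u) = 0" using u vinv by simp
  have "p \<in> psmul u ` lam n z \<longleftrightarrow> p \<in> lam n z" for p
  proof -
    have e: "inverse u * fst p - inverse u * snd p * z = inverse u * (fst p - snd p * z)"
      by (simp add: algebra_simps)
    have "p \<in> psmul u ` lam n z \<longleftrightarrow> psmul (inverse u) p \<in> lam n z" by (rule mem_sc[OF u(1)])
    also have "\<dots> \<longleftrightarrow> dvp 0 (inverse u * snd p) \<and> dvp n (inverse u * (fst p - snd p * z))"
      unfolding mem_lam by (simp add: psmul_def e)
    also have "\<dots> \<longleftrightarrow> p \<in> lam n z" using u vi by (simp add: dvp_mult_iff mem_lam)
    finally show ?thesis .
  qed
  then show ?thesis by blast
qed

lemma sc_lam_sub:
  assumes c: "c \<noteq> 0" and s: "psmul c ` lam n z \<subseteq> lam n' z'"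
  shows "dvp 0 c \<and> n' \<le> v c + n \<and> dvp n' (c * (z - z'))"
proof -
  have "(z, 1) \<in> lam n z" by (simp add: mem_lam)
  then have "psmul c (z, 1) \<in> lam n' z'" using s by blast
  then have 1: "dvp 0 c \<and> dvp n' (c * (z - z'))" by (simp add: psmul_def mem_lam algebra_simps)
  have "(P n, 0) \<in> lam n z" by (simp add: mem_lam dvp_P)
  then have "psmul c (P n, 0) \<in> lam n' z'" using s by blast
  then have "dvp n' (c * P n)" by (simp add: psmul_def mem_lam)
  then have "n' \<le> v c + n" using c by (simp add: dvp_def vmult)
  then show ?thesis using 1 by simp
qed

definition vx :: "int \<Rightarrow> 'k \<Rightarrow> ('k \<times> 'k) set set" where
  "vx n z = homothety_class (lam n z)"

lemma vx_eq_iff: "vx n z = vx n' z' \<longleftrightarrow> n = n' \<and> dvp n (z - z')"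
proof
  assume h: "vx n z = vx n' z'"
  have "lam n' z' \<in> vx n' z'" unfolding vx_def homothety_class_def
    by (rule CollectI, rule exI[of _ 1]) (simp add: psmul_def)
  then have "lam n' z' \<in> vx n z" using h by simp
  then obtain c where c: "c \<noteq> 0" "lam n' z' = psmul c ` lam n z"
    by (auto simp: vx_def homothety_class_def)
  then have "psmul (inverse c) ` lam n' z' = lam n z"
    by (simp add: sc_sc)
  then have s2: "psmul (inverse c) ` lam n' z' \<subseteq> lam n z" by simp
  have s1: "psmul c ` lam n z \<subseteq> lam n' z'" using c by simp
  from sc_lam_sub[OF c(1) s1] sc_lam_sub[OF _ s2] c(1)
  have A: "dvp 0 c" "n' \<le> v c + n" "dvp n' (c * (z - z'))"
    "dvp 0 (inverse c)" "n \<le> v (inverse c) + n'" by auto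
  have vc: "v c = 0" using A(1,4) c(1) vinv[of c] by (simp add: dvp_def)
  then have "n = n'" using A(2,5) c(1) vinv[of c] by simp
  moreover have "dvp n (z - z')" using A(3) vc c(1) \<open>n = n'\<close> by (simp add: dvp_mult_iff)
  ultimately show "n = n' \<and> dvp n (z - z')" by simp
next
  assume "n = n' \<and> dvp n (z - z')"
  then have "lam n z = lam n' z'" using lam_eq by auto
  then show "vx n z = vx n' z'" by (simp add: vx_def)
qed

lemma lattice_lam: "bt_lattice v (lam n z)"
  unfolding bt_lattice_def lam_def sp_def
  by (rule exI[of _ "(P n, 0)"], rule exI[of _ "(z, 1)"]) simp

lemma mem_sp:
  assumes D: "fst e1 * snd e2 - snd e1 * fst e2 \<noteq> 0"
  shows "p \<in> sp e1 e2 \<longleftrightarrow>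
    dvp 0 ((fst p * snd e2 - snd p * fst e2) / (fst e1 * snd e2 - snd e1 * fst e2)) \<and>
    dvp 0 ((fst e1 * snd p - snd e1 * fst p) / (fst e1 * snd e2 - snd e1 * fst e2))"
proof -
  obtain a1 b1 a2 b2 where e: "e1 = (a1, b1)" "e2 = (a2, b2)" by (cases e1, cases e2)
  obtain x y where p: "p = (x, y)" by (cases p)
  define D where "D = a1 * b2 - b1 * a2"
  have Dn: "D \<noteq> 0" using D e by (simp add: D_def)
  have "(x, y) \<in> sp (a1, b1) (a2, b2) \<longleftrightarrow>
    dvp 0 ((x * b2 - y * a2) / D) \<and> dvp 0 ((a1 * y - b1 * x) / D)"
  proof
    assume "(x, y) \<in> sp (a1, b1) (a2, b2)"
    then obtain a b where ab: "dvp 0 a" "dvp 0 b" "x = a * a1 + b * a2" "y = a * b1 + b * b2"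
      by (auto simp: sp_def padd_def psmul_def val_ring_dvp)
    have i1: "x * b2 - y * a2 = a * D" by (simp add: ab D_def algebra_simps)
    have i2: "a1 * y - b1 * x = b * D" by (simp add: ab D_def algebra_simps)
    have "(x * b2 - y * a2) / D = a" "(a1 * y - b1 * x) / D = b"
      using Dn by (simp_all only: i1 i2) simp_all
    then show "dvp 0 ((x * b2 - y * a2) / D) \<and> dvp 0 ((a1 * y - b1 * x) / D)" using ab by simp
  next
    assume h: "dvp 0 ((x * b2 - y * a2) / D) \<and> dvp 0 ((a1 * y - b1 * x) / D)"
    define a where "a = (x * b2 - y * a2) / D"
    define b where "b = (a1 * y - b1 * x) / D"
    have i1: "(x * b2 - y * a2) * a1 + (a1 * y - b1 * x) * a2 = x * D"
      by (simp add: D_def algebra_simps)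
    have i2: "(x * b2 - y * a2) * b1 + (a1 * y - b1 * x) * b2 = y * D"
      by (simp add: D_def algebra_simps)
    have "a * a1 + b * a2 = ((x * b2 - y * a2) * a1 + (a1 * y - b1 * x) * a2) / D"
      by (simp add: a_def b_def add_divide_distrib)
    also have "\<dots> = x" using Dn by (simp only: i1) simp
    finally have 1: "a * a1 + b * a2 = x" .
    have "a * b1 + b * b2 = ((x * b2 - y * a2) * b1 + (a1 * y - b1 * x) * b2) / D"
      by (simp add: a_def b_def add_divide_distrib)
    also have "\<dots> = y" using Dn by (simp only: i2) simp
    finally have 2: "a * b1 + b * b2 = y" .
    have "(x, y) = padd (psmul a (a1, b1)) (psmul b (a2, b2))"
      using 1 2 by (simp add: padd_def psmul_def)
    then show "(x, y) \<in> sp (a1, b1) (a2, b2)" using h unfolding sp_def val_ring_dvp a_def b_def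
      by blast
  qed
  then show ?thesis using e p by (simp add: D_def)
qed

lemma sp_swap1: "x \<in> sp e1 e2 \<Longrightarrow> x \<in> sp e2 e1"
proof -
  assume "x \<in> sp e1 e2"
  then obtain a b where ab: "a \<in> val_ring v" "b \<in> val_ring v" "x = padd (psmul a e1) (psmul b e2)"
    unfolding sp_def by blast
  have "padd (psmul a e1) (psmul b e2) = padd (psmul b e2) (psmul a e1)"
    unfolding padd_def by (rule prod_eqI) (simp_all add: add.commute)
  then have "x = padd (psmul b e2) (psmul a e1)" using ab(3) by simp
  then show ?thesis using ab(1,2) unfolding sp_def by (intro CollectI exI[of _ b] exI[of _ a]) simp
qed

lemma sp_swap: "sp e1 e2 = sp e2 e1"
proof
  show "sp e1 e2 \<subseteq> sp e2 e1" using sp_swap1 by (rule subsetI)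
  show "sp e2 e1 \<subseteq> sp e1 e2" using sp_swap1 by (rule subsetI)
qed

end


lemma fid1:
  fixes a1 b1 a2 b2 xa xb :: "'k::field"
  assumes Dn: "a1 * b2 - b1 * a2 \<noteq> 0"
  shows "xa = ((xa * b2 - xb * a2) / (a1 * b2 - b1 * a2)) * a1 + ((a1 * xb - b1 * xa) / (a1 * b2 - b1 * a2)) * a2"
    and "xb = ((xa * b2 - xb * a2) / (a1 * b2 - b1 * a2)) * b1 + ((a1 * xb - b1 * xa) / (a1 * b2 - b1 * a2)) * b2"
proof -
  define D where "D = a1 * b2 - b1 * a2"
  have d: "D \<noteq> 0" using Dn by (simp add: D_def)
  have i1: "(xa * b2 - xb * a2) * a1 + (a1 * xb - b1 * xa) * a2 = xa * D"
    by (simp add: D_def algebra_simps)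
  have i2: "(xa * b2 - xb * a2) * b1 + (a1 * xb - b1 * xa) * b2 = xb * D"
    by (simp add: D_def algebra_simps)
  have "((xa * b2 - xb * a2) / D) * a1 + ((a1 * xb - b1 * xa) / D) * a2 = ((xa * b2 - xb * a2) * a1 + (a1 * xb - b1 * xa) * a2) / D"
    by (simp add: add_divide_distrib)
  also have "\<dots> = xa" using d by (simp only: i1) simp
  finally show "xa = ((xa * b2 - xb * a2) / (a1 * b2 - b1 * a2)) * a1 + ((a1 * xb - b1 * xa) / (a1 * b2 - b1 * a2)) * a2" by (simp add: D_def)
  have "((xa * b2 - xb * a2) / D) * b1 + ((a1 * xb - b1 * xa) / D) * b2 = ((xa * b2 - xb * a2) * b1 + (a1 * xb - b1 * xa) * b2) / D"
    by (simp add: add_divide_distrib)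
  also have "\<dots> = xb" using d by (simp only: i2) simp
  finally show "xb = ((xa * b2 - xb * a2) / (a1 * b2 - b1 * a2)) * b1 + ((a1 * xb - b1 * xa) / (a1 * b2 - b1 * a2)) * b2" by (simp add: D_def)
qed

lemma fid2:
  fixes a1 b1 a2 b2 s t :: "'k::field"
  assumes b1: "b1 \<noteq> 0"
  shows "inverse b1 * (s * b1 + t * b2) = s + t * (b2 / b1)"
    and "inverse b1 * (s * a1 + t * a2) - inverse b1 * (s * b1 + t * b2) * (a1 / b1) = t * (- (a1 * b2 - b1 * a2) / b1 ^ 2)"
  using b1 by (simp_all add: field_simps power2_eq_square)

lemma fid3:
  fixes a1 b1 a2 b2 T U :: "'k::field"
  assumes b1: "b1 \<noteq> 0" and Dn: "a1 * b2 - b1 * a2 \<noteq> 0"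
  shows "((U * b1 + T * a1) * b2 - (T * b1) * a2) / (a1 * b2 - b1 * a2) = T + U * (b1 * b2 / (a1 * b2 - b1 * a2))"
    and "(a1 * (T * b1) - b1 * (U * b1 + T * a1)) / (a1 * b2 - b1 * a2) = U * (- (b1 ^ 2) / (a1 * b2 - b1 * a2))"
proof -
  have "(U * b1 + T * a1) * b2 - (T * b1) * a2 = T * (a1 * b2 - b1 * a2) + U * (b1 * b2)" by (simp add: algebra_simps)
  then show "((U * b1 + T * a1) * b2 - (T * b1) * a2) / (a1 * b2 - b1 * a2) = T + U * (b1 * b2 / (a1 * b2 - b1 * a2))"
    using Dn by (simp add: add_divide_distrib)
  have "a1 * (T * b1) - b1 * (U * b1 + T * a1) = U * (- (b1 ^ 2))" by (simp add: algebra_simps power2_eq_square)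
  then show "(a1 * (T * b1) - b1 * (U * b1 + T * a1)) / (a1 * b2 - b1 * a2) = U * (- (b1 ^ 2) / (a1 * b2 - b1 * a2))"
    by simp
qed

lemma fid4:
  fixes a1 b1 x1 x2 :: "'k::field"
  assumes b1: "b1 \<noteq> 0"
  shows "x1 = (inverse b1 * x1 - inverse b1 * x2 * (a1 / b1)) * b1 + (inverse b1 * x2) * a1"
proof -
  have "(inverse b1 * x1 - inverse b1 * x2 * (a1 / b1)) * b1 = x1 - x2 * (a1 / b1)"
    using b1 by (simp add: field_simps)
  moreover have "(inverse b1 * x2) * a1 = x2 * (a1 / b1)" by (simp add: divide_inverse algebra_simps)
  ultimately show ?thesis by simp
qed

context dval begin

lemma NF_case:
  assumes D: "a1 * b2 - b1 * a2 \<noteq> 0" and b1: "b1 \<noteq> 0" and b2: "b2 = 0 \<or> v b1 \<le> v b2"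
  shows "sp (a1, b1) (a2, b2) = psmul b1 ` lam (v (a1 * b2 - b1 * a2) - 2 * v b1) (a1 / b1)"
proof (rule Set.set_eqI)
  fix p :: "'k \<times> 'k"
  obtain x1 x2 where p: "p = (x1, x2)" by (cases p)
  define D' where "D' = a1 * b2 - b1 * a2"
  have Dn: "D' \<noteq> 0" using D by (simp add: D'_def)
  define n where "n = v D' - 2 * v b1"
  have vb2b1: "dvp 0 (b2 / b1)" using b1 b2 by (cases "b2 = 0") (auto simp: dvp_def vdiv)
  have memsp: "p \<in> sp (a1, b1) (a2, b2) \<longleftrightarrow> dvp 0 ((x1 * b2 - x2 * a2) / D') \<and> dvp 0 ((a1 * x2 - b1 * x1) / D')"
    using mem_sp[of "(a1, b1)" "(a2, b2)" p] D p by (simp add: D'_def)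
  have pp: "psmul (inverse b1) p = (inverse b1 * x1, inverse b1 * x2)" by (simp add: p psmul_def)
  have memlam: "p \<in> psmul b1 ` lam n (a1 / b1) \<longleftrightarrow>
      dvp 0 (inverse b1 * x2) \<and> dvp n (inverse b1 * x1 - inverse b1 * x2 * (a1 / b1))"
    using mem_sc[OF b1, of p "lam n (a1 / b1)"] unfolding pp mem_lam' .
  have "dvp 0 ((x1 * b2 - x2 * a2) / D') \<and> dvp 0 ((a1 * x2 - b1 * x1) / D') \<longleftrightarrow>
        dvp 0 (inverse b1 * x2) \<and> dvp n (inverse b1 * x1 - inverse b1 * x2 * (a1 / b1))"
  proof
    assume h: "dvp 0 ((x1 * b2 - x2 * a2) / D') \<and> dvp 0 ((a1 * x2 - b1 * x1) / D')"
    define s where "s = (x1 * b2 - x2 * a2) / D'"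
    define t where "t = (a1 * x2 - b1 * x1) / D'"
    have st: "dvp 0 s" "dvp 0 t" using h by (simp_all add: s_def t_def)
    have x1: "x1 = s * a1 + t * a2" and x2: "x2 = s * b1 + t * b2"
      using fid1[OF D, where xa=x1 and xb=x2] by (simp_all add: s_def t_def D'_def)
    have T: "inverse b1 * x2 = s + t * (b2 / b1)"
      unfolding x2 using fid2(1)[OF b1] .
    have U: "inverse b1 * x1 - inverse b1 * x2 * (a1 / b1) = t * (- D' / b1 ^ 2)"
      unfolding x1 x2 D'_def using fid2(2)[OF b1] .
    have 1: "dvp 0 (inverse b1 * x2)" unfolding T
      using dvp_add[OF st(1)] dvp_mult[OF st(2) vb2b1] by simp
    have "v (- D' / b1 ^ 2) = n" using Dn b1 by (simp add: vdiv v_pow n_def)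
    then have "dvp (0 + n) (t * (- D' / b1 ^ 2))" using dvp_mult[OF st(2) dvp_v[of "- D' / b1 ^ 2"]] by simp
    then have 2: "dvp n (inverse b1 * x1 - inverse b1 * x2 * (a1 / b1))" unfolding U by simp
    show "dvp 0 (inverse b1 * x2) \<and> dvp n (inverse b1 * x1 - inverse b1 * x2 * (a1 / b1))"
      using 1 2 by simp
  next
    assume h: "dvp 0 (inverse b1 * x2) \<and> dvp n (inverse b1 * x1 - inverse b1 * x2 * (a1 / b1))"
    define T where "T = inverse b1 * x2"
    define U where "U = inverse b1 * x1 - inverse b1 * x2 * (a1 / b1)"
    have TU: "dvp 0 T" "dvp n U" using h by (simp_all add: T_def U_def)
    have x2: "x2 = T * b1" using b1 by (simp add: T_def)
    have x1: "x1 = U * b1 + T * a1" unfolding T_def U_def by (rule fid4[OF b1])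
    have s: "(x1 * b2 - x2 * a2) / D' = T + U * (b1 * b2 / D')"
      unfolding x1 x2 D'_def using fid3(1)[OF b1 D] .
    have t: "(a1 * x2 - b1 * x1) / D' = U * (- (b1 ^ 2) / D')"
      unfolding x1 x2 D'_def using fid3(2)[OF b1 D] .
    have "dvp 0 (U * (b1 * b2 / D'))"
    proof (cases "b2 = 0")
      case True then show ?thesis by simp
    next
      case False
      then have "v (b1 * b2 / D') = v b1 + v b2 - v D'" using b1 Dn by (simp add: vdiv vmult)
      then have "dvp (n + (v b1 + v b2 - v D')) (U * (b1 * b2 / D'))"
        using dvp_mult[OF TU(2) dvp_v[of "b1 * b2 / D'"]] by simp
      then show ?thesis by (rule dvp_mono) (use b2 False in \<open>simp add: n_def\<close>)
    qed
    then have 1: "dvp 0 ((x1 * b2 - x2 * a2) / D')" unfolding s using TU(1) dvp_add by blast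
    have "v (- (b1 ^ 2) / D') = 2 * v b1 - v D'" using b1 Dn by (simp add: vdiv v_pow)
    then have "dvp (n + (2 * v b1 - v D')) (U * (- (b1 ^ 2) / D'))"
      using dvp_mult[OF TU(2) dvp_v[of "- (b1 ^ 2) / D'"]] by simp
    then have 2: "dvp 0 ((a1 * x2 - b1 * x1) / D')" unfolding t by (simp add: n_def)
    show "dvp 0 ((x1 * b2 - x2 * a2) / D') \<and> dvp 0 ((a1 * x2 - b1 * x1) / D')" using 1 2 by simp
  qed
  then have "p \<in> sp (a1, b1) (a2, b2) \<longleftrightarrow> p \<in> psmul b1 ` lam n (a1 / b1)"
    using memsp memlam by simp
  then show "p \<in> sp (a1, b1) (a2, b2) \<longleftrightarrow> p \<in> psmul b1 ` lam (v (a1 * b2 - b1 * a2) - 2 * v b1) (a1 / b1)"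
    by (simp only: n_def D'_def)
qed

lemma NF:
  assumes "bt_lattice v L"
  shows "\<exists>c n z. c \<noteq> 0 \<and> L = psmul c ` lam n z"
proof -
  obtain e1 e2 where e: "fst e1 * snd e2 - snd e1 * fst e2 \<noteq> 0" "L = sp e1 e2"
    using assms unfolding bt_lattice_def sp_def[symmetric] by (elim exE conjE) (rule that)
  obtain a1 b1 a2 b2 where ee: "e1 = (a1, b1)" "e2 = (a2, b2)" by (cases e1, cases e2)
  have D: "a1 * b2 - b1 * a2 \<noteq> 0" using e ee by simp
  show ?thesis
  proof (cases "b1 \<noteq> 0 \<and> (b2 = 0 \<or> v b1 \<le> v b2)")
    case True
    then have "L = psmul b1 ` lam (v (a1 * b2 - b1 * a2) - 2 * v b1) (a1 / b1)" "b1 \<noteq> 0"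
      using NF_case[OF D] e ee by simp_all
    then show ?thesis by blast
  next
    case False
    then have c: "b2 \<noteq> 0 \<and> (b1 = 0 \<or> v b2 \<le> v b1)" using D by auto
    have D2: "a2 * b1 - b2 * a1 \<noteq> 0" using D by (simp add: algebra_simps)
    have "L = sp (a2, b2) (a1, b1)" using e ee sp_swap[of e1 e2] by simp
    then have "L = psmul b2 ` lam (v (a2 * b1 - b2 * a1) - 2 * v b2) (a2 / b2)" "b2 \<noteq> 0"
      using NF_case[OF D2] c by simp_all
    then show ?thesis by blast
  qed
qed

lemma V_char: "bt_vertices v = {vx n z | n z. True}"
proof
  show "bt_vertices v \<subseteq> {vx n z | n z. True}"
  proof
    fix X assume "X \<in> bt_vertices v"
    then obtain L where L: "bt_lattice v L" "X = homothety_class L" unfolding bt_vertices_def by (elim CollectE exE conjE) (rule that)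
    obtain c n z where "c \<noteq> 0" "L = psmul c ` lam n z" using NF[OF L(1)] by (elim exE conjE) (rule that)
    then have "X = vx n z" using L hc_sc by (simp add: vx_def)
    then show "X \<in> {vx n z | n z. True}" by (intro CollectI exI) simp
  qed
next
  show "{vx n z | n z. True} \<subseteq> bt_vertices v"
  proof
    fix X assume "X \<in> {vx n z | n z. True}"
    then obtain n z where "X = vx n z" by blast
    then show "X \<in> bt_vertices v" unfolding bt_vertices_def vx_def
      using lattice_lam[of n z] by (intro CollectI exI[of _ "lam n z"]) simp
  qed
qed

lemma vx_in_V[simp]: "vx n z \<in> bt_vertices v"
  unfolding V_char by (intro CollectI exI) simp

lemma V_cases: "X \<in> bt_vertices v \<Longrightarrow> \<exists>n z. X = vx n z"
  unfolding V_char by simp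

end


context dval begin

lemma bt_adj_sym: "bt_adj v X Y \<Longrightarrow> bt_adj v Y X"
  unfolding bt_adj_def by blast

lemma lam_in_vx: "lam n z \<in> vx n z"
  unfolding vx_def homothety_class_def
  by (rule CollectI, rule exI[of _ 1]) simp

lemma qr_unfold:
  "quot_residue v L L' \<longleftrightarrow> (\<exists>f. (\<forall>x\<in>L. dvp 0 (f x)) \<and>
      (\<forall>x\<in>L. \<forall>y\<in>L. dvp 1 (f (padd x y) - f x - f y)) \<and>
      (\<forall>a. dvp 0 a \<longrightarrow> (\<forall>x\<in>L. dvp 1 (f (psmul a x) - a * f x))) \<and>
      (\<forall>c. dvp 0 c \<longrightarrow> (\<exists>x\<in>L. dvp 1 (f x - c))) \<and>
      L' = {x\<in>L. dvp 1 (f x)})"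
  unfolding quot_residue_def val_ring_dvp max_ideal_dvp by simp

lemma adj_up_raw: "bt_adj v (vx n z) (vx (n + 1) z)"
proof -
  define f where "f x = (fst x - snd x * z) / P n" for x :: "'k \<times> 'k"
  have sub: "lam (n + 1) z \<subseteq> lam n z"
  proof
    fix x assume "x \<in> lam (n + 1) z"
    then show "x \<in> lam n z" using dvp_mono[of "n+1" "fst x - snd x * z" n] by (simp add: mem_lam)
  qed
  have "quot_residue v (lam n z) (lam (n + 1) z)"
    unfolding qr_unfold
  proof (rule exI[of _ f], intro conjI ballI allI impI)
    fix x assume "x \<in> lam n z"
    then show "dvp 0 (f x)" by (simp add: mem_lam f_def dvp_div_iff)
  next
    fix x y :: "'k \<times> 'k"
    have "f (padd x y) - f x - f y = 0"
      by (simp add: f_def padd_def diff_divide_distrib add_divide_distrib algebra_simps)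
    then show "dvp 1 (f (padd x y) - f x - f y)" by simp
  next
    fix a and x :: "'k \<times> 'k"
    have "f (psmul a x) - a * f x = 0"
      by (simp add: f_def psmul_def diff_divide_distrib algebra_simps)
    then show "dvp 1 (f (psmul a x) - a * f x)" by simp
  next
    fix c :: 'k assume c: "dvp 0 c"
    have "(c * P n, 0) \<in> lam n z" using dvp_mult[OF c dvp_P[of n]] by (simp add: mem_lam)
    moreover have "f (c * P n, 0) - c = 0" by (simp add: f_def)
    ultimately show "\<exists>x\<in>lam n z. dvp 1 (f x - c)" by (metis dvp0)
  next
    show "lam (n + 1) z = {x \<in> lam n z. dvp 1 (f x)}"
    proof (rule Set.set_eqI)
      fix x :: "'k \<times> 'k"
      have "dvp 1 (f x) \<longleftrightarrow> dvp (n + 1) (fst x - snd x * z)"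
        by (simp add: f_def dvp_div_iff add.commute)
      then show "x \<in> lam (n + 1) z \<longleftrightarrow> x \<in> {x \<in> lam n z. dvp 1 (f x)}"
        using dvp_mono[of "n+1" "fst x - snd x * z" n] by (auto simp: mem_lam)
    qed
  qed
  then show ?thesis unfolding bt_adj_def using sub lam_in_vx[of n z] lam_in_vx[of "n+1" z]
    by auto
qed

lemma adj_up: "dvp n (z' - z) \<Longrightarrow> bt_adj v (vx n z) (vx (n + 1) z')"
proof -
  assume h: "dvp n (z' - z)"
  then have "vx n z = vx n z'" using vx_eq_iff[of n z n z'] dvp_uminus[of n "z' - z"] by simp
  then show ?thesis using adj_up_raw[of n z'] by simp
qed

lemma sc_closed:
  assumes a: "dvp 0 a" and y: "y \<in> psmul c ` lam n z"
  shows "psmul a y \<in> psmul c ` lam n z"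
proof -
  obtain q where q: "q \<in> lam n z" "y = psmul c q" using y by blast
  obtain q1 q2 where qq: "q = (q1, q2)" by (cases q)
  have 1: "dvp 0 (a * q2)" using dvp_mult[OF a, of 0 q2] q qq by (simp add: mem_lam)
  have "dvp (0 + n) (a * (q1 - q2 * z))" using dvp_mult[OF a, of n "q1 - q2 * z"] q qq by (simp add: mem_lam)
  then have 2: "dvp n (a * q1 - a * q2 * z)" by (simp add: algebra_simps)
  have "psmul a q \<in> lam n z" using 1 2 qq by (simp add: psmul_def mem_lam)
  moreover have "psmul a y = psmul c (psmul a q)" using q by (simp add: psmul_def algebra_simps)
  ultimately show ?thesis by blast
qed

lemma sc_sub_cancel:
  assumes "psmul a ` S \<subseteq> psmul b ` T" "b \<noteq> 0"
  shows "psmul (inverse b * a) ` S \<subseteq> T"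
proof
  fix y assume "y \<in> psmul (inverse b * a) ` S"
  then obtain x where x: "x \<in> S" "y = psmul (inverse b * a) x" by blast
  have "psmul a x \<in> psmul b ` T" using assms x by blast
  then have "psmul (inverse b) (psmul a x) \<in> T" using mem_sc[OF assms(2)] by blast
  moreover have "psmul (inverse b) (psmul a x) = y" using x by (simp add: psmul_def algebra_simps)
  ultimately show "y \<in> T" by simp
qed

lemma mem_piL:
  assumes c: "c \<noteq> 0"
  shows "psmul c (x1, x2) \<in> psmul unif ` psmul c ` lam n z \<longleftrightarrow> dvp 1 x2 \<and> dvp (n + 1) (x1 - x2 * z)"
proof -
  have uc: "unif * c \<noteq> 0" using c unif by simp
  have "psmul c (x1, x2) \<in> psmul unif ` psmul c ` lam n z \<longleftrightarrow>
        psmul (inverse (unif * c)) (psmul c (x1, x2)) \<in> lam n z"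
    unfolding sc_sc using mem_sc[OF uc] by blast
  also have "psmul (inverse (unif * c)) (psmul c (x1, x2)) = (x1 / unif, x2 / unif)"
  proof -
    have "inverse (unif * c) * (c * y) = y / unif" for y using c unif
      by (simp add: divide_inverse)
    then show ?thesis by (simp add: psmul_def)
  qed
  also have "(x1 / unif, x2 / unif) \<in> lam n z \<longleftrightarrow> dvp 0 (x2 / unif) \<and> dvp n ((x1 - x2 * z) / unif)"
  proof -
    have e: "x1 / unif - x2 / unif * z = (x1 - x2 * z) / unif" by (simp add: diff_divide_distrib)
    show ?thesis unfolding mem_lam' e ..
  qed
  also have "\<dots> \<longleftrightarrow> dvp 1 x2 \<and> dvp (n + 1) (x1 - x2 * z)"
  proof -
    have a: "dvp 0 (x2 / unif) \<longleftrightarrow> dvp (0 + v unif) x2" by (rule dvp_div_iff[OF unif(1)])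
    have b: "dvp n ((x1 - x2 * z) / unif) \<longleftrightarrow> dvp (n + v unif) (x1 - x2 * z)" by (rule dvp_div_iff[OF unif(1)])
    show ?thesis unfolding a b unif(2) by simp
  qed
  finally show ?thesis .
qed

lemma NQ:
  assumes c: "c \<noteq> 0"
  shows "\<not> quot_residue v (psmul c ` lam n z) (psmul unif ` psmul c ` lam n z)"
proof
  define L where "L = psmul c ` lam n z"
  assume "quot_residue v (psmul c ` lam n z) (psmul unif ` psmul c ` lam n z)"
  then have "quot_residue v L (psmul unif ` L)" unfolding L_def .
  then obtain f where Q1: "\<forall>x\<in>L. dvp 0 (f x)"
    and Q2: "\<forall>x\<in>L. \<forall>y\<in>L. dvp 1 (f (padd x y) - f x - f y)"
    and Q3: "\<forall>a. dvp 0 a \<longrightarrow> (\<forall>x\<in>L. dvp 1 (f (psmul a x) - a * f x))"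
    and Q5: "psmul unif ` L = {x\<in>L. dvp 1 (f x)}"
    unfolding qr_unfold by (elim exE conjE) (rule that)
  define u where "u = psmul c (P n, 0)"
  define w where "w = psmul c (z, 1)"
  have uL: "u \<in> L" unfolding u_def L_def by (rule imageI) (simp add: mem_lam dvp_P)
  have wL: "w \<in> L" unfolding w_def L_def by (rule imageI) (simp add: mem_lam)
  have "u \<notin> psmul unif ` L" unfolding u_def L_def using mem_piL[OF c, of "P n" 0 n z] by (simp add: dvp_def)
  then have fu: "\<not> dvp 1 (f u)" using Q5 uL by blast
  have fu0: "dvp 0 (f u)" and fw0: "dvp 0 (f w)" using Q1 uL wL by auto
  have fmu0: "dvp 0 (- f u)" using fu0 by simp
  define A where "A = psmul (f w) u"
  define B where "B = psmul (- f u) w"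
  have AL: "A \<in> L" unfolding A_def L_def using sc_closed[OF fw0] uL L_def by simp
  have BL: "B \<in> L" unfolding B_def L_def using sc_closed[OF fmu0] wL L_def by simp
  have eqAB: "padd A B = psmul c (f w * P n + (- f u) * z, - f u)"
    unfolding A_def B_def u_def w_def by (simp add: padd_def psmul_def algebra_simps)
  have "(f w * P n + (- f u) * z, - f u) \<in> lam n z"
    using fmu0 dvp_mult[OF fw0 dvp_P[of n]] by (simp add: mem_lam)
  then have "padd A B \<in> L" unfolding eqAB L_def by (rule imageI)
  have d1: "dvp 1 (f (padd A B) - f A - f B)" using Q2 AL BL by blast
  have d2: "dvp 1 (f A - f w * f u)" using Q3 fw0 uL unfolding A_def by blast
  have d3: "dvp 1 (f B - (- f u) * f w)" using Q3 fmu0 wL unfolding B_def by blast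
  have "f (padd A B) = (f (padd A B) - f A - f B) + (f A - f w * f u) + (f B - (- f u) * f w)"
    by (simp add: algebra_simps)
  then have "dvp 1 (f (padd A B))" using d1 d2 d3 dvp_add by metis
  then have "padd A B \<in> psmul unif ` L" using Q5 \<open>padd A B \<in> L\<close> by blast
  then have "dvp 1 (- f u)" unfolding L_def eqAB using mem_piL[OF c] by simp
  then show False using fu by simp
qed

end


context dval begin

lemma CL:
  assumes c: "c \<noteq> 0" and c': "c' \<noteq> 0"
    and sub: "psmul c' ` lam n' z' \<subseteq> psmul c ` lam n z"
    and qr: "quot_residue v (psmul c ` lam n z) (psmul c' ` lam n' z')"
  shows "(n' = n + 1 \<and> dvp n (z' - z)) \<or> (n = n' + 1 \<and> dvp n' (z - z'))"
proof -
  define L where "L = psmul c ` lam n z"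
  define L' where "L' = psmul c' ` lam n' z'"
  have "quot_residue v L L'" using qr unfolding L_def L'_def .
  then obtain f where Q1: "\<forall>x\<in>L. dvp 0 (f x)"
    and Q3: "\<forall>a. dvp 0 a \<longrightarrow> (\<forall>x\<in>L. dvp 1 (f (psmul a x) - a * f x))"
    and Q4: "\<forall>c. dvp 0 c \<longrightarrow> (\<exists>x\<in>L. dvp 1 (f x - c))"
    and Q5: "L' = {x\<in>L. dvp 1 (f x)}"
    unfolding qr_unfold by (elim exE conjE) (rule that)
  have u0: "dvp 0 unif" using unif by (simp add: dvp_def)
  have piL: "psmul unif ` L \<subseteq> L'"
  proof
    fix y assume "y \<in> psmul unif ` L"
    then obtain x where x: "x \<in> L" "y = psmul unif x" by blast
    have yL: "y \<in> L" using sc_closed[OF u0] x unfolding L_def by simp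
    have 1: "dvp 1 (f y - unif * f x)" using Q3 u0 x by blast
    have "dvp (v unif + 0) (unif * f x)" using dvp_mult[OF dvp_v Q1[rule_format, OF x(1)]] .
    then have 2: "dvp 1 (unif * f x)" using unif by simp
    have "f y = (f y - unif * f x) + unif * f x" by simp
    then have "dvp 1 (f y)" using dvp_add[OF 1 2] by metis
    then show "y \<in> L'" using Q5 yL by blast
  qed
  have "psmul (unif * c) ` lam n z \<subseteq> psmul c' ` lam n' z'"
    using piL unfolding L_def L'_def sc_sc .
  then have s1: "psmul (inverse c' * (unif * c)) ` lam n z \<subseteq> lam n' z'"
    using sc_sub_cancel c' by blast
  define e where "e = inverse c' * (unif * c)"
  have en: "e \<noteq> 0" using c c' unif by (simp add: e_def)
  have E: "dvp 0 e" "n' \<le> v e + n" "dvp n' (e * (z - z'))"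
    using sc_lam_sub[OF en s1[folded e_def]] by auto
  have s2: "psmul (inverse c * c') ` lam n' z' \<subseteq> lam n z"
    using sc_sub_cancel[OF sub c] .
  define d where "d = inverse c * c'"
  have dn: "d \<noteq> 0" using c c' by (simp add: d_def)
  have Dd: "dvp 0 d" "n \<le> v d + n'" "dvp n (d * (z' - z))"
    using sc_lam_sub[OF dn s2[folded d_def]] by auto
  have vd: "v d = v c' - v c" using c c' by (simp add: d_def vmult vinv)
  have ve: "v e = 1 + v c - v c'" using c c' unif by (simp add: e_def vmult vinv)
  have vd0: "v d \<ge> 0" using Dd(1) dn by (simp add: dvp_def)
  have ve0: "v e \<ge> 0" using E(1) en by (simp add: dvp_def)
  have c'_eq: "c' = c * d" using c by (simp add: d_def)
  show ?thesis
  proof (cases "v d = 0")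
    case True
    have zz: "dvp n (z' - z)" using Dd(3) dn True by (simp add: dvp_mult_iff)
    have nn: "n' = n \<or> n' = n + 1" using Dd(2) E(2) True ve vd by linarith
    show ?thesis
    proof (cases "n' = n")
      case True2: True
      have "L' = psmul c' ` lam n z" unfolding L'_def using lam_eq[OF zz] True2 by simp
      also have "\<dots> = psmul c ` psmul d ` lam n z" by (simp add: c'_eq sc_sc)
      also have "\<dots> = L" unfolding L_def using sc_lam_unit[OF dn True] by simp
      finally have LL: "L' = L" .
      obtain x where x: "x \<in> L" "dvp 1 (f x - 1)" using Q4[rule_format, of 1] by auto
      then have "dvp 1 (f x)" using Q5 LL by blast
      then have "dvp 1 (f x - (f x - 1))" using dvp_diff x(2) by blast
      then show ?thesis by simp
    next
      case False
      then show ?thesis using nn zz by simp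
    qed
  next
    case False
    then have vd1: "v d = 1" "v e = 0" using vd0 ve0 vd ve by linarith+
    have zz: "dvp n' (z - z')" using E(3) en vd1 by (simp add: dvp_mult_iff)
    have nn: "n' = n \<or> n = n' + 1" using Dd(2) E(2) vd1 by linarith
    show ?thesis
    proof (cases "n' = n")
      case True2: True
      have zz': "dvp n (z' - z)" using zz True2 dvp_uminus[of n "z' - z"] by simp
      define u where "u = d / unif"
      have un: "u \<noteq> 0" using dn unif by (simp add: u_def)
      have vu: "v u = 0" using dn unif vd1 by (simp add: u_def vdiv)
      have dd: "c' = unif * c * u" using c unif by (simp add: c'_eq u_def)
      have "L' = psmul c' ` lam n z" unfolding L'_def using lam_eq[OF zz'] True2 by simp
      also have "\<dots> = psmul unif ` psmul c ` psmul u ` lam n z" by (simp add: dd sc_sc mult.assoc)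
      also have "\<dots> = psmul unif ` L" unfolding L_def using sc_lam_unit[OF un vu] by simp
      finally have "L' = psmul unif ` L" .
      then show ?thesis using NQ[OF c, of n z] qr unfolding L_def L'_def by simp
    next
      case False
      then show ?thesis using nn zz by simp
    qed
  qed
qed

lemma mem_vx: "L \<in> vx n z \<Longrightarrow> \<exists>c. c \<noteq> 0 \<and> L = psmul c ` lam n z"
  unfolding vx_def homothety_class_def by blast

lemma adj_char:
  assumes "bt_adj v (vx n z) (vx n' z')"
  shows "(n' = n + 1 \<and> dvp n (z' - z)) \<or> (n = n' + 1 \<and> dvp n' (z - z'))"
proof -
  have "(\<exists>L\<in>vx n z. \<exists>L'\<in>vx n' z'. L' \<subseteq> L \<and> quot_residue v L L') \<or>
        (\<exists>L\<in>vx n' z'. \<exists>L'\<in>vx n z. L' \<subseteq> L \<and> quot_residue v L L')"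
    using assms unfolding bt_adj_def by (elim conjE)
  then show ?thesis
  proof (elim disjE bexE conjE)
    fix L L' assume h: "L \<in> vx n z" "L' \<in> vx n' z'" "L' \<subseteq> L" "quot_residue v L L'"
    obtain c where c: "c \<noteq> 0" "L = psmul c ` lam n z" using mem_vx[OF h(1)] by blast
    obtain c' where c': "c' \<noteq> 0" "L' = psmul c' ` lam n' z'" using mem_vx[OF h(2)] by blast
    show ?thesis using CL[OF c(1) c'(1)] h c c' by simp
  next
    fix L L' assume h: "L \<in> vx n' z'" "L' \<in> vx n z" "L' \<subseteq> L" "quot_residue v L L'"
    obtain c where c: "c \<noteq> 0" "L = psmul c ` lam n' z'" using mem_vx[OF h(1)] by blast
    obtain c' where c': "c' \<noteq> 0" "L' = psmul c' ` lam n z" using mem_vx[OF h(2)] by blast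
    show ?thesis using CL[OF c(1) c'(1)] h c c' by auto
  qed
qed

lemma adj_iff:
  "bt_adj v (vx n z) (vx n' z') \<longleftrightarrow> (n' = n + 1 \<and> dvp n (z' - z)) \<or> (n = n' + 1 \<and> dvp n' (z - z'))"
proof
  assume "bt_adj v (vx n z) (vx n' z')"
  then show "(n' = n + 1 \<and> dvp n (z' - z)) \<or> (n = n' + 1 \<and> dvp n' (z - z'))" by (rule adj_char)
next
  assume "(n' = n + 1 \<and> dvp n (z' - z)) \<or> (n = n' + 1 \<and> dvp n' (z - z'))"
  then show "bt_adj v (vx n z) (vx n' z')"
  proof
    assume "n' = n + 1 \<and> dvp n (z' - z)"
    then show ?thesis using adj_up[of n z' z] by simp
  next
    assume "n = n' + 1 \<and> dvp n' (z - z')"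
    then show ?thesis using adj_up[of n' z z'] bt_adj_sym by simp
  qed
qed

definition ht :: "('k \<times> 'k) set set \<Rightarrow> int" where
  "ht X = (SOME n. \<exists>z. X = vx n z)"

lemma ht_vx[simp]: "ht (vx n z) = n"
proof -
  have "\<exists>m. \<exists>w. vx n z = vx m w" by blast
  then have "\<exists>w. vx n z = vx (ht (vx n z)) w" unfolding ht_def by (rule someI_ex)
  then obtain w where "vx n z = vx (ht (vx n z)) w" by blast
  then show ?thesis by (simp add: vx_eq_iff)
qed

lemma adj_V: "bt_adj v X Y \<Longrightarrow> X \<in> bt_vertices v \<and> Y \<in> bt_vertices v"
  unfolding bt_adj_def by blast

lemma adj_ht: "bt_adj v X Y \<Longrightarrow> ht Y = ht X + 1 \<or> ht X = ht Y + 1"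
proof -
  assume a: "bt_adj v X Y"
  obtain n z where X: "X = vx n z" using adj_V[OF a] V_cases by blast
  obtain n' z' where Y: "Y = vx n' z'" using adj_V[OF a] V_cases by blast
  show ?thesis using adj_char[of n z n' z'] a X Y by auto
qed

lemma adj_parent:
  assumes "bt_adj v (vx n z) Y" "ht Y = n - 1"
  shows "Y = vx (n - 1) z"
proof -
  obtain m w where Y: "Y = vx m w" using adj_V[OF assms(1)] V_cases by blast
  then have m: "m = n - 1" using assms(2) by simp
  then have "dvp m (z - w)" using adj_char[of n z m w] assms(1) Y by auto
  then show ?thesis using Y m vx_eq_iff[of m w m z] dvp_uminus[of m "z - w"] by simp
qed

lemma parent_unique:
  assumes "bt_adj v X Y" "bt_adj v X Y'" "ht Y = ht X - 1" "ht Y' = ht X - 1"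
  shows "Y = Y'"
proof -
  obtain n z where X: "X = vx n z" using adj_V[OF assms(1)] V_cases by blast
  show ?thesis using adj_parent[of n z Y] adj_parent[of n z Y'] assms X by simp
qed

end


lemma walk_single: "is_walk adj [x]"
  by (simp add: is_walk_def)

lemma walk_cons: "adj x (hd ys) \<Longrightarrow> is_walk adj ys \<Longrightarrow> is_walk adj (x # ys)"
  unfolding is_walk_def
proof (intro conjI allI impI)
  fix i assume h: "adj x (hd ys)" "ys \<noteq> [] \<and> (\<forall>i. Suc i < length ys \<longrightarrow> adj (ys ! i) (ys ! Suc i))"
    "Suc i < length (x # ys)"
  show "adj ((x # ys) ! i) ((x # ys) ! Suc i)"
  proof (cases i)
    case 0 then show ?thesis using h by (simp add: hd_conv_nth)
  next
    case (Suc j) then show ?thesis using h by simp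
  qed
qed simp

definition conn :: "('a \<Rightarrow> 'a \<Rightarrow> bool) \<Rightarrow> 'a \<Rightarrow> 'a \<Rightarrow> bool" where
  "conn adj x y \<longleftrightarrow> (\<exists>xs. is_walk adj xs \<and> hd xs = x \<and> last xs = y)"

lemma conn_rtranclp: "adj\<^sup>*\<^sup>* x y \<Longrightarrow> conn adj x y"
proof (induction rule: converse_rtranclp_induct)
  case base
  then show ?case unfolding conn_def using walk_single by fastforce
next
  case (step x z)
  then obtain ys where ys: "is_walk adj ys" "hd ys = z" "last ys = y" unfolding conn_def by blast
  have "ys \<noteq> []" using ys(1) by (simp add: is_walk_def)
  then have "is_walk adj (x # ys)" "hd (x # ys) = x" "last (x # ys) = y"
    using walk_cons[of adj x ys] step ys by auto
  then show ?case unfolding conn_def by blast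
qed

lemma gdist_le:
  assumes "is_walk adj xs" "hd xs = x" "last xs = y"
  shows "gdist adj x y \<le> length xs - 1"
proof -
  have "xs \<noteq> []" using assms(1) by (simp add: is_walk_def)
  then have "length xs = Suc (length xs - 1)" by simp
  then show ?thesis unfolding gdist_def using assms by (intro Least_le) blast
qed

lemma gdist_ex:
  assumes "conn adj x y"
  shows "\<exists>xs. is_walk adj xs \<and> hd xs = x \<and> last xs = y \<and> length xs = Suc (gdist adj x y)"
proof -
  obtain xs where xs: "is_walk adj xs" "hd xs = x" "last xs = y" using assms unfolding conn_def by blast
  have "xs \<noteq> []" using xs(1) by (simp add: is_walk_def)
  then have "\<exists>n. \<exists>xs. is_walk adj xs \<and> hd xs = x \<and> last xs = y \<and> length xs = Suc n"
    using xs by (intro exI[of _ "length xs - 1"] exI[of _ xs]) simp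
  then show ?thesis unfolding gdist_def by (rule LeastI_ex)
qed

lemma gdist_refl: "gdist adj x x = 0"
  using gdist_le[of adj "[x]" x x] walk_single[of adj x] by simp

lemma gdist_1:
  assumes "conn adj x y" "gdist adj x y = 1"
  shows "adj x y"
proof -
  obtain xs where xs: "is_walk adj xs" "hd xs = x" "last xs = y" "length xs = 2"
    using gdist_ex[OF assms(1)] assms(2) by auto
  then obtain a b where "xs = [a, b]"
    by (metis One_nat_def Suc_1 length_0_conv length_Suc_conv)
  then show ?thesis using xs unfolding is_walk_def by auto
qed

lemma walk_map:
  assumes "\<And>a b. adj a b \<Longrightarrow> adj' (f a) (f b)" "is_walk adj xs"
  shows "is_walk adj' (map f xs)"
  using assms unfolding is_walk_def by auto

lemma gdist_map_le:
  assumes "conn adj x y" "\<And>a b. adj a b \<Longrightarrow> adj (f a) (f b)"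
  shows "gdist adj (f x) (f y) \<le> gdist adj x y \<and> conn adj (f x) (f y)"
proof -
  obtain xs where xs: "is_walk adj xs" "hd xs = x" "last xs = y" "length xs = Suc (gdist adj x y)"
    using gdist_ex[OF assms(1)] by blast
  have ne: "xs \<noteq> []" using xs(1) by (simp add: is_walk_def)
  have w: "is_walk adj (map f xs)" using walk_map[of adj adj f xs] assms(2) xs(1) by blast
  have "hd (map f xs) = f x" "last (map f xs) = f y" using ne xs by (simp_all add: hd_map last_map)
  then show ?thesis using gdist_le[OF w] w xs(4) unfolding conn_def by auto
qed

lemma walk_lip:
  assumes "\<And>a b. adj a b \<Longrightarrow> \<bar>h a - h b\<bar> \<le> (1::int)" "is_walk adj xs"
  shows "\<bar>h (last xs) - h (hd xs)\<bar> \<le> int (length xs) - 1"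
  using assms(2)
proof (induction xs)
  case Nil then show ?case by (simp add: is_walk_def)
next
  case (Cons x ys)
  show ?case
  proof (cases ys)
    case Nil then show ?thesis by simp
  next
    case (Cons y zs)
    have a: "adj x y" using Cons.prems Cons unfolding is_walk_def by force
    have w: "is_walk adj ys" using Cons.prems Cons unfolding is_walk_def by force
    have "\<bar>h (last ys) - h (hd ys)\<bar> \<le> int (length ys) - 1" using Cons.IH[OF w] .
    moreover have "\<bar>h y - h x\<bar> \<le> 1" using assms(1)[OF a] by simp
    ultimately show ?thesis using Cons by simp
  qed
qed

lemma gdist_lip:
  assumes "\<And>a b. adj a b \<Longrightarrow> \<bar>h a - h b\<bar> \<le> (1::int)" "conn adj x y"
  shows "\<bar>h y - h x\<bar> \<le> int (gdist adj x y)"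
proof -
  obtain xs where xs: "is_walk adj xs" "hd xs = x" "last xs = y" "length xs = Suc (gdist adj x y)"
    using gdist_ex[OF assms(2)] by blast
  show ?thesis using walk_lip[OF assms(1) xs(1)] xs by simp
qed

lemma walk_seq:
  assumes "\<And>i. adj (g i) (g (Suc i))"
  shows "is_walk adj (map g [m..<Suc (m + k)]) \<and> hd (map g [m..<Suc (m + k)]) = g m \<and>
         last (map g [m..<Suc (m + k)]) = g (m + k)"
proof -
  let ?xs = "map g [m..<Suc (m + k)]"
  have len: "length ?xs = Suc k" by simp
  have nth: "?xs ! i = g (m + i)" if "i < Suc k" for i
    using that by (simp del: upt_Suc)
  have "is_walk adj ?xs" unfolding is_walk_def using len nth assms by (auto simp del: upt_Suc)
  moreover have "hd ?xs = g m" using nth[of 0] len by (simp add: hd_conv_nth del: upt_Suc)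
  moreover have "last ?xs = g (m + k)" using nth[of k] len by (simp add: last_conv_nth del: upt_Suc)
  ultimately show ?thesis by blast
qed

lemma gdist_seq:
  assumes "\<And>i. adj (g i) (g (Suc i))"
  shows "gdist adj (g m) (g (m + k)) \<le> k" "conn adj (g m) (g (m + k))"
proof -
  have w: "is_walk adj (map g [m..<Suc (m + k)]) \<and> hd (map g [m..<Suc (m + k)]) = g m \<and>
         last (map g [m..<Suc (m + k)]) = g (m + k)" using walk_seq[of adj g m k] assms by blast
  then show "gdist adj (g m) (g (m + k)) \<le> k"
    using gdist_le[of adj "map g [m..<Suc (m + k)]" "g m" "g (m + k)"] by (simp del: upt_Suc)
  show "conn adj (g m) (g (m + k))" using w unfolding conn_def by blast
qed

lemma walk_rev:
  assumes "\<And>a b. adj a b \<Longrightarrow> adj b a" "is_walk adj xs"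
  shows "is_walk adj (rev xs)"
  unfolding is_walk_def
proof (intro conjI allI impI)
  show "rev xs \<noteq> []" using assms(2) by (simp add: is_walk_def)
  fix i assume i: "Suc i < length (rev xs)"
  let ?j = "length xs - Suc (Suc i)"
  have "adj (xs ! ?j) (xs ! Suc ?j)" using assms(2) i unfolding is_walk_def by auto
  moreover have "rev xs ! i = xs ! Suc ?j" "rev xs ! Suc i = xs ! ?j" using i
    by (simp_all add: rev_nth Suc_diff_Suc)
  ultimately show "adj (rev xs ! i) (rev xs ! Suc i)" using assms(1) by simp
qed

lemma conn_sym:
  assumes "\<And>a b. adj a b \<Longrightarrow> adj b a" "conn adj x y"
  shows "conn adj y x"
proof -
  obtain xs where xs: "is_walk adj xs" "hd xs = x" "last xs = y" using assms(2) unfolding conn_def by blast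
  have "xs \<noteq> []" using xs(1) by (simp add: is_walk_def)
  then show ?thesis using walk_rev[OF assms(1) xs(1)] xs unfolding conn_def
    by (intro exI[of _ "rev xs"]) (simp add: hd_rev last_rev)
qed

lemma gdist_sym_le:
  assumes "\<And>a b. adj a b \<Longrightarrow> adj b a" "conn adj x y"
  shows "gdist adj y x \<le> gdist adj x y"
proof -
  obtain xs where xs: "is_walk adj xs" "hd xs = x" "last xs = y" "length xs = Suc (gdist adj x y)"
    using gdist_ex[OF assms(2)] by blast
  have "xs \<noteq> []" using xs(1) by (simp add: is_walk_def)
  then show ?thesis using gdist_le[OF walk_rev[OF assms(1) xs(1)]] xs by (simp add: hd_rev last_rev)
qed

lemma gdist_sym:
  assumes "\<And>a b. adj a b \<Longrightarrow> adj b a" "conn adj x y"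
  shows "gdist adj y x = gdist adj x y"
  using gdist_sym_le[OF assms] gdist_sym_le[OF assms(1) conn_sym[OF assms]] by simp

lemma ray_adj:
  assumes "is_ray V adj s" "\<And>x y. x \<in> V \<Longrightarrow> y \<in> V \<Longrightarrow> conn adj x y"
  shows "adj (s n) (s (Suc n))"
proof -
  have "int (gdist adj (s n) (s (Suc n))) = 1" using assms(1) unfolding is_ray_def by auto
  then have g: "gdist adj (s n) (s (Suc n)) = 1" by simp
  have s1: "s n \<in> V" and s2: "s (Suc n) \<in> V" using assms(1) unfolding is_ray_def by auto
  have "conn adj (s n) (s (Suc n))" using assms(2)[OF s1 s2] .
  then show ?thesis using gdist_1[of adj "s n" "s (Suc n)"] g by simp
qed

lemma ray_ne2:
  assumes "is_ray V adj s"
  shows "s n \<noteq> s (Suc (Suc n))"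
proof
  assume "s n = s (Suc (Suc n))"
  moreover have "int (gdist adj (s n) (s (Suc (Suc n)))) = 2" using assms unfolding is_ray_def by auto
  ultimately show False using gdist_refl[of adj "s n"] by simp
qed

lemma ray_equiv_refl: "ray_equiv r r"
  unfolding ray_equiv_def by auto

lemma ray_equiv_sym: "ray_equiv r r' \<Longrightarrow> ray_equiv r' r"
  unfolding ray_equiv_def by metis

lemma ray_equiv_trans: "ray_equiv r r' \<Longrightarrow> ray_equiv r' r'' \<Longrightarrow> ray_equiv r r''"
proof -
  assume "ray_equiv r r'" "ray_equiv r' r''"
  then obtain a b c d where 1: "\<And>n. r (n + a) = r' (n + b)" and 2: "\<And>n. r' (n + c) = r'' (n + d)"
    unfolding ray_equiv_def by blast
  have "r (n + (a + c)) = r'' (n + (b + d))" for n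
  proof -
    have "r (n + (a + c)) = r' (n + c + b)" using 1[of "n + c"] by (simp add: add.assoc add.commute add.left_commute)
    also have "\<dots> = r'' (n + b + d)" using 2[of "n + b"] by (simp add: add.assoc add.commute add.left_commute)
    finally show ?thesis by (simp add: add.assoc)
  qed
  then show ?thesis unfolding ray_equiv_def by blast
qed

lemma ray_equiv_comp: "ray_equiv r r' \<Longrightarrow> ray_equiv (f \<circ> r) (f \<circ> r')"
proof -
  assume "ray_equiv r r'"
  then obtain a b where "\<And>n. r (n + a) = r' (n + b)" unfolding ray_equiv_def by blast
  then have "\<And>n. (f \<circ> r) (n + a) = (f \<circ> r') (n + b)" by simp
  then show ?thesis unfolding ray_equiv_def by blast
qed

lemma lim_eventually_const:
  assumes "\<And>n. n \<ge> N \<Longrightarrow> f n = (c::real)"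
  shows "lim f = c"
proof -
  have "eventually (\<lambda>n. f n = c) sequentially" using assms eventually_sequentially by blast
  then have "f \<longlonglongrightarrow> c" by (rule tendsto_eventually)
  then show ?thesis by (rule limI)
qed


locale setting = dval v for v :: "'k::field \<Rightarrow> int" +
  fixes G :: "('g, 'b) monoid_scheme" and \<chi> \<theta> :: "'g \<Rightarrow> 'k"
  assumes grp: "group G" and chr: "character G \<chi>" and coc: "cocycle1 G \<chi> \<theta>"
begin

abbreviation V where "V \<equiv> bt_vertices v"
abbreviation adj where "adj \<equiv> bt_adj v"

definition act :: "'g \<Rightarrow> ('k \<times> 'k) set set \<Rightarrow> ('k \<times> 'k) set set" where
  "act g = gl_vertex_act (affine_rep \<chi> \<theta> g)"

lemma chi_nz: "g \<in> carrier G \<Longrightarrow> \<chi> g \<noteq> 0"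
  using chr unfolding character_def by blast

lemma chi_mult: "g \<in> carrier G \<Longrightarrow> h \<in> carrier G \<Longrightarrow> \<chi> (g \<otimes>\<^bsub>G\<^esub> h) = \<chi> g * \<chi> h"
  using chr unfolding character_def by blast

lemma theta_mult: "g \<in> carrier G \<Longrightarrow> h \<in> carrier G \<Longrightarrow> \<theta> (g \<otimes>\<^bsub>G\<^esub> h) = \<theta> g + \<chi> g * \<theta> h"
  using coc unfolding cocycle1_def by blast

lemma one_G: "\<one>\<^bsub>G\<^esub> \<in> carrier G" using grp by (simp add: group.is_monoid monoid.one_closed)

lemma chi_one: "\<chi> \<one>\<^bsub>G\<^esub> = 1"
proof -
  have "\<chi> \<one>\<^bsub>G\<^esub> = \<chi> \<one>\<^bsub>G\<^esub> * \<chi> \<one>\<^bsub>G\<^esub>"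
    using chi_mult[OF one_G one_G] grp by (simp add: group.is_monoid monoid.l_one[OF _ one_G])
  then show ?thesis using chi_nz[OF one_G] by simp
qed

lemma theta_one: "\<theta> \<one>\<^bsub>G\<^esub> = 0"
proof -
  have "\<theta> \<one>\<^bsub>G\<^esub> = \<theta> \<one>\<^bsub>G\<^esub> + \<chi> \<one>\<^bsub>G\<^esub> * \<theta> \<one>\<^bsub>G\<^esub>"
    using theta_mult[OF one_G one_G] grp by (simp add: group.is_monoid monoid.l_one[OF _ one_G])
  then have "\<theta> \<one>\<^bsub>G\<^esub> + 0 = \<theta> \<one>\<^bsub>G\<^esub> + \<theta> \<one>\<^bsub>G\<^esub>" using chi_one by simp
  then show ?thesis by (metis add_left_cancel)
qed

lemma image_hc:
  assumes lin: "\<And>c x. f (psmul c x) = psmul c (f x)"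
  shows "(\<lambda>L. f ` L) ` homothety_class L = homothety_class (f ` L)"
proof -
  have "f ` (psmul c ` L) = psmul c ` (f ` L)" for c
    by (simp add: image_image lin)
  then show ?thesis unfolding homothety_class_def by blast
qed

lemma mat_lam:
  assumes g: "g \<in> carrier G"
  shows "mat_apply (affine_rep \<chi> \<theta> g) ` lam n z = lam (n + v (\<chi> g)) (\<chi> g * z + \<theta> g)"
proof (rule Set.set_eqI)
  fix y :: "'k \<times> 'k"
  obtain y1 y2 where y: "y = (y1, y2)" by (cases y)
  have cn: "\<chi> g \<noteq> 0" using chi_nz[OF g] .
  have M: "mat_apply (affine_rep \<chi> \<theta> g) (x1, x2) = (\<chi> g * x1 + \<theta> g * x2, x2)" for x1 x2
    by (simp add: mat_apply_def affine_rep_def)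
  show "y \<in> mat_apply (affine_rep \<chi> \<theta> g) ` lam n z \<longleftrightarrow> y \<in> lam (n + v (\<chi> g)) (\<chi> g * z + \<theta> g)"
  proof
    assume "y \<in> mat_apply (affine_rep \<chi> \<theta> g) ` lam n z"
    then obtain x where x: "x \<in> lam n z" "y = mat_apply (affine_rep \<chi> \<theta> g) x" by blast
    obtain x1 x2 where xx: "x = (x1, x2)" by (cases x)
    have h: "dvp 0 x2" "dvp n (x1 - x2 * z)" using x(1) xx by (simp_all add: mem_lam)
    have e: "\<chi> g * x1 + \<theta> g * x2 - x2 * (\<chi> g * z + \<theta> g) = \<chi> g * (x1 - x2 * z)"
      by (simp add: algebra_simps)
    have "dvp (n + v (\<chi> g)) (\<chi> g * (x1 - x2 * z))" using h(2) cn by (simp add: dvp_mult_iff)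
    then show "y \<in> lam (n + v (\<chi> g)) (\<chi> g * z + \<theta> g)"
      using x(2) xx h(1) M e by (simp add: mem_lam)
  next
    assume "y \<in> lam (n + v (\<chi> g)) (\<chi> g * z + \<theta> g)"
    then have h: "dvp 0 y2" "dvp (n + v (\<chi> g)) (y1 - y2 * (\<chi> g * z + \<theta> g))" using y by (simp_all add: mem_lam)
    define x1 where "x1 = (y1 - \<theta> g * y2) / \<chi> g"
    have e: "x1 - y2 * z = (y1 - y2 * (\<chi> g * z + \<theta> g)) / \<chi> g"
      using cn by (simp add: x1_def field_simps)
    have "dvp n (x1 - y2 * z)" unfolding e using h(2) cn by (simp add: dvp_div_iff)
    then have "(x1, y2) \<in> lam n z" using h(1) by (simp add: mem_lam)
    moreover have "mat_apply (affine_rep \<chi> \<theta> g) (x1, y2) = y" using cn y M by (simp add: x1_def)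
    ultimately show "y \<in> mat_apply (affine_rep \<chi> \<theta> g) ` lam n z" by (metis imageI)
  qed
qed

lemma act_vx:
  assumes g: "g \<in> carrier G"
  shows "act g (vx n z) = vx (n + v (\<chi> g)) (\<chi> g * z + \<theta> g)"
proof -
  have lin: "mat_apply (affine_rep \<chi> \<theta> g) (psmul c x) = psmul c (mat_apply (affine_rep \<chi> \<theta> g) x)" for c x
    by (simp add: mat_apply_def affine_rep_def psmul_def algebra_simps)
  show ?thesis unfolding act_def gl_vertex_act_def vx_def image_hc[OF lin] mat_lam[OF g] ..
qed

lemma act_V: "g \<in> carrier G \<Longrightarrow> X \<in> V \<Longrightarrow> act g X \<in> V"
  using act_vx V_cases by (metis vx_in_V)

lemma act_comp:
  assumes g: "g \<in> carrier G" and h: "h \<in> carrier G" and X: "X \<in> V"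
  shows "act g (act h X) = act (g \<otimes>\<^bsub>G\<^esub> h) X"
proof -
  obtain n z where Xv: "X = vx n z" using V_cases[OF X] by blast
  have gh: "g \<otimes>\<^bsub>G\<^esub> h \<in> carrier G" using g h grp by (simp add: group.is_monoid monoid.m_closed)
  have "act g (act h X) = vx (n + v (\<chi> h) + v (\<chi> g)) (\<chi> g * (\<chi> h * z + \<theta> h) + \<theta> g)"
    using Xv act_vx g h by simp
  also have "\<dots> = vx (n + v (\<chi> (g \<otimes>\<^bsub>G\<^esub> h))) (\<chi> (g \<otimes>\<^bsub>G\<^esub> h) * z + \<theta> (g \<otimes>\<^bsub>G\<^esub> h))"
    using chi_mult[OF g h] theta_mult[OF g h] chi_nz[OF g] chi_nz[OF h]
    by (simp add: vmult algebra_simps)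
  also have "\<dots> = act (g \<otimes>\<^bsub>G\<^esub> h) X" using Xv act_vx[OF gh] by simp
  finally show ?thesis .
qed

lemma act_one: "X \<in> V \<Longrightarrow> act \<one>\<^bsub>G\<^esub> X = X"
  using act_vx[OF one_G] chi_one theta_one V_cases by force

lemma inv_G: "g \<in> carrier G \<Longrightarrow> inv\<^bsub>G\<^esub> g \<in> carrier G"
  using grp by (simp add: group.inv_closed)

lemma act_inv1: "g \<in> carrier G \<Longrightarrow> X \<in> V \<Longrightarrow> act (inv\<^bsub>G\<^esub> g) (act g X) = X"
  using act_comp[OF inv_G] act_one grp by (simp add: group.l_inv)

lemma act_inv2: "g \<in> carrier G \<Longrightarrow> X \<in> V \<Longrightarrow> act g (act (inv\<^bsub>G\<^esub> g) X) = X"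
  using act_comp[OF _ inv_G] act_one grp by (simp add: group.r_inv)

lemma chi_inv: "g \<in> carrier G \<Longrightarrow> \<chi> (inv\<^bsub>G\<^esub> g) = inverse (\<chi> g)"
proof -
  assume g: "g \<in> carrier G"
  have "\<chi> (inv\<^bsub>G\<^esub> g) * \<chi> g = 1"
    using chi_mult[OF inv_G[OF g] g] chi_one grp g by (simp add: group.l_inv)
  then show ?thesis using chi_nz[OF g] by (simp add: field_simps)
qed

lemma act_adj:
  assumes g: "g \<in> carrier G" and a: "adj X Y"
  shows "adj (act g X) (act g Y)"
proof -
  obtain n z where X: "X = vx n z" using adj_V[OF a] V_cases by blast
  obtain n' z' where Y: "Y = vx n' z'" using adj_V[OF a] V_cases by blast
  have cn: "\<chi> g \<noteq> 0" using chi_nz[OF g] .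
  have e1: "\<chi> g * z' + \<theta> g - (\<chi> g * z + \<theta> g) = \<chi> g * (z' - z)" by (simp add: algebra_simps)
  have e2: "\<chi> g * z + \<theta> g - (\<chi> g * z' + \<theta> g) = \<chi> g * (z - z')" by (simp add: algebra_simps)
  have "(n' = n + 1 \<and> dvp n (z' - z)) \<or> (n = n' + 1 \<and> dvp n' (z - z'))"
    using a X Y adj_iff by simp
  then have "(n' + v (\<chi> g) = n + v (\<chi> g) + 1 \<and> dvp (n + v (\<chi> g)) (\<chi> g * (z' - z))) \<or>
             (n + v (\<chi> g) = n' + v (\<chi> g) + 1 \<and> dvp (n' + v (\<chi> g)) (\<chi> g * (z - z')))"
    using cn by (auto simp: dvp_mult_iff)
  then show ?thesis unfolding X Y act_vx[OF g] adj_iff e1 e2 .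
qed

lemma ht_lip: "adj a b \<Longrightarrow> \<bar>ht a - ht b\<bar> \<le> 1"
  using adj_ht by fastforce

lemma adj_symm: "adj a b \<Longrightarrow> adj b a"
  by (rule bt_adj_sym)

lemma R_down: "adj\<^sup>*\<^sup>* (vx n z) (vx (n - int j) z)"
proof (induction j)
  case 0 then show ?case by simp
next
  case (Suc j)
  have "adj (vx (n - int j) z) (vx (n - int (Suc j)) z)"
    unfolding adj_iff by simp
  then show ?case using Suc by (simp add: rtranclp.rtrancl_into_rtrancl)
qed

lemma R_sym: "adj\<^sup>*\<^sup>* x y \<Longrightarrow> adj\<^sup>*\<^sup>* y x"
proof (induction rule: rtranclp_induct)
  case base then show ?case by simp
next
  case (step y z)
  then show ?case using adj_symm by (meson converse_rtranclp_into_rtranclp)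
qed

lemma R_base:
  assumes "m \<le> n" "dvp m z"
  shows "adj\<^sup>*\<^sup>* (vx n z) (vx m 0)"
proof -
  have "adj\<^sup>*\<^sup>* (vx n z) (vx (n - int (nat (n - m))) z)" by (rule R_down)
  moreover have "vx (n - int (nat (n - m))) z = vx m 0" using assms by (simp add: vx_eq_iff)
  ultimately show ?thesis by simp
qed

lemma V_conn:
  assumes X: "X \<in> V" and Y: "Y \<in> V"
  shows "conn adj X Y"
proof -
  obtain n z where Xv: "X = vx n z" using V_cases[OF X] by blast
  obtain n' z' where Yv: "Y = vx n' z'" using V_cases[OF Y] by blast
  define m where "m = min (min n n') (min (if z = 0 then n else v z) (if z' = 0 then n else v z'))"
  have "dvp m z" "dvp m z'" by (auto simp: m_def dvp_def)
  moreover have "m \<le> n" "m \<le> n'" by (auto simp: m_def)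
  ultimately have "adj\<^sup>*\<^sup>* X (vx m 0)" "adj\<^sup>*\<^sup>* Y (vx m 0)" using R_base Xv Yv by auto
  then have "adj\<^sup>*\<^sup>* X Y" using R_sym by (meson rtranclp_trans)
  then show ?thesis by (rule conn_rtranclp)
qed

lemma act_isom:
  assumes g: "g \<in> carrier G" and X: "X \<in> V" and Y: "Y \<in> V"
  shows "gdist adj (act g X) (act g Y) = gdist adj X Y"
proof -
  have a: "\<And>a b. adj a b \<Longrightarrow> adj (act g a) (act g b)" using act_adj[OF g] .
  have b: "\<And>a b. adj a b \<Longrightarrow> adj (act (inv\<^bsub>G\<^esub> g) a) (act (inv\<^bsub>G\<^esub> g) b)" using act_adj[OF inv_G[OF g]] .
  have 1: "gdist adj (act g X) (act g Y) \<le> gdist adj X Y" using gdist_map_le[of adj X Y "act g"] V_conn[OF X Y] a by blast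
  have "gdist adj (act (inv\<^bsub>G\<^esub> g) (act g X)) (act (inv\<^bsub>G\<^esub> g) (act g Y)) \<le> gdist adj (act g X) (act g Y)"
    using gdist_map_le[of adj "act g X" "act g Y" "act (inv\<^bsub>G\<^esub> g)"] V_conn[OF act_V[OF g X] act_V[OF g Y]] b by blast
  then have 2: "gdist adj X Y \<le> gdist adj (act g X) (act g Y)" using act_inv1[OF g X] act_inv1[OF g Y] by simp
  show ?thesis using 1 2 by simp
qed

lemma act_ray: "g \<in> carrier G \<Longrightarrow> is_ray V adj s \<Longrightarrow> is_ray V adj (act g \<circ> s)"
  unfolding is_ray_def using act_isom act_V by simp

definition rr :: "nat \<Rightarrow> ('k \<times> 'k) set set" where
  "rr j = vx (- int j) 0"

lemma rr_adj: "adj (rr j) (rr (Suc j))"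
  unfolding rr_def adj_iff by simp

lemma rr_ray: "is_ray V adj rr"
  unfolding is_ray_def
proof (intro conjI allI)
  fix n show "rr n \<in> V" by (simp add: rr_def)
next
  fix m n
  have le: "gdist adj (rr m) (rr (m + k)) \<le> k" "conn adj (rr m) (rr (m + k))" for m k
    using gdist_seq[of adj rr m k] rr_adj by auto
  have ge: "int k \<le> int (gdist adj (rr m) (rr (m + k)))" for m k
    using gdist_lip[of adj ht "rr m" "rr (m + k)"] ht_lip le(2)[of m k] by (simp add: rr_def)
  have eq: "gdist adj (rr m) (rr (m + k)) = k" for m k using le(1)[of m k] ge[of k m] by simp
  show "int (gdist adj (rr m) (rr n)) = \<bar>int m - int n\<bar>"
  proof (cases "m \<le> n")
    case True
    then obtain k where "n = m + k" using le_Suc_ex by blast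
    then show ?thesis using eq[of m k] by simp
  next
    case False
    then obtain k where k: "m = n + k" using le_Suc_ex[of n m] by auto
    have "gdist adj (rr m) (rr n) = gdist adj (rr n) (rr m)"
      unfolding k using gdist_sym[of adj "rr n" "rr (n + k)"] adj_symm le(2) by blast
    then show ?thesis using eq[of n k] k by simp
  qed
qed

end


context setting begin

lemma act_rr_equiv:
  assumes g: "g \<in> carrier G"
  shows "\<exists>A B. (\<forall>i. rr (i + A) = act g (rr (i + B))) \<and> int A = int B - v (\<chi> g)"
proof -
  define k where "k = v (\<chi> g)"
  define B where "B = nat (max k (k - v (\<theta> g)))"
  define A where "A = nat (int B - k)"
  have B1: "int B \<ge> k" "int B \<ge> k - v (\<theta> g)" by (auto simp: B_def)
  have A1: "int A = int B - k" using B1 by (simp add: A_def)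
  have "rr (i + A) = act g (rr (i + B))" for i
  proof -
    have "act g (rr (i + B)) = vx (- int (i + B) + k) (\<theta> g)"
      unfolding rr_def act_vx[OF g] k_def by simp
    also have "\<dots> = vx (- int (i + B) + k) 0"
      using B1 by (simp add: vx_eq_iff dvp_def)
    also have "\<dots> = rr (i + A)"
    proof -
      have h: "- int (i + B) + k = - int (i + A)" using A1 by simp
      show ?thesis by (simp only: rr_def h)
    qed
    finally show ?thesis by simp
  qed
  then show ?thesis using A1 k_def by blast
qed

lemma rr_equiv_act: "g \<in> carrier G \<Longrightarrow> ray_equiv rr (act g \<circ> rr)"
  using act_rr_equiv unfolding ray_equiv_def comp_def by blast

lemma rr_fixed:
  assumes g: "g \<in> carrier G"
  shows "boundary_act (act g) (ray_class V adj rr) = ray_class V adj rr"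
proof (rule Set.set_eqI)
  fix y
  show "y \<in> boundary_act (act g) (ray_class V adj rr) \<longleftrightarrow> y \<in> ray_class V adj rr"
  proof
    assume "y \<in> boundary_act (act g) (ray_class V adj rr)"
    then obtain r' where r': "r' \<in> ray_class V adj rr" "y = act g \<circ> r'"
      unfolding boundary_act_def by blast
    have "is_ray V adj r'" "ray_equiv rr r'" using r'(1) unfolding ray_class_def by auto
    then have "is_ray V adj y" "ray_equiv rr y"
      using act_ray[OF g] r'(2) ray_equiv_trans[OF rr_equiv_act[OF g] ray_equiv_comp] by auto
    then show "y \<in> ray_class V adj rr" unfolding ray_class_def by blast
  next
    assume y: "y \<in> ray_class V adj rr"
    have yr: "is_ray V adj y" "ray_equiv rr y" using y unfolding ray_class_def by auto
    define r'' where "r'' = act (inv\<^bsub>G\<^esub> g) \<circ> y"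
    have "is_ray V adj r''" using act_ray[OF inv_G[OF g] yr(1)] by (simp add: r''_def)
    moreover have "ray_equiv rr r''"
      using ray_equiv_trans[OF rr_equiv_act[OF inv_G[OF g]] ray_equiv_comp[OF yr(2)]] by (simp add: r''_def)
    ultimately have "r'' \<in> ray_class V adj rr" unfolding ray_class_def by blast
    moreover have "act g \<circ> r'' = y"
    proof
      fix n
      have "y n \<in> V" using yr(1) unfolding is_ray_def by blast
      then show "(act g \<circ> r'') n = y n" using act_inv2[OF g] by (simp add: r''_def)
    qed
    ultimately show "y \<in> boundary_act (act g) (ray_class V adj rr)"
      unfolding boundary_act_def by blast
  qed
qed

lemma rr_in_boundary: "ray_class V adj rr \<in> tree_boundary V adj"
  unfolding tree_boundary_def using rr_ray by blast

end

locale setting2 = setting +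
  assumes nc: "\<not> coboundary1 G \<chi> \<theta>"
    and hv: "\<exists>g\<in>carrier G. v (\<chi> g) \<noteq> 0"
begin

lemma pos_g: "\<exists>g\<in>carrier G. v (\<chi> g) > 0"
proof -
  obtain g where g: "g \<in> carrier G" "v (\<chi> g) \<noteq> 0" using hv by blast
  show ?thesis
  proof (cases "v (\<chi> g) > 0")
    case True then show ?thesis using g by blast
  next
    case False
    then have "v (\<chi> (inv\<^bsub>G\<^esub> g)) > 0" using g chi_inv[OF g(1)] chi_nz[OF g(1)] by (simp add: vinv)
    then show ?thesis using inv_G[OF g(1)] by blast
  qed
qed

lemma v_one_minus:
  assumes "x \<noteq> 0" "v x > 0"
  shows "1 - x \<noteq> 0 \<and> v (1 - x) = 0"
proof -
  have ne: "1 - x \<noteq> 0" using assms by auto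
  have a: "dvp 0 (1 - x)" using dvp_diff[of 0 1 x] assms by (simp add: dvp_def)
  have "v (1 - x) \<le> 0"
  proof (rule ccontr)
    assume "\<not> v (1 - x) \<le> 0"
    then have "dvp 1 (1 - x)" "dvp 1 x" using assms by (auto simp: dvp_def)
    then have "dvp 1 ((1 - x) + x)" by (rule dvp_add)
    then show False by simp
  qed
  then show ?thesis using a ne by (simp add: dvp_def)
qed

lemma ray_s_adj: "is_ray V adj s \<Longrightarrow> adj (s n) (s (Suc n))"
  by (rule ray_adj[OF _ V_conn])

lemma main_unique:
  assumes s: "is_ray V adj s" and inv: "\<And>g. g \<in> carrier G \<Longrightarrow> ray_equiv s (act g \<circ> s)"
  shows "ray_equiv rr s"
proof -
  define t where "t n = ht (s n)" for n
  have sV: "s n \<in> V" for n using s unfolding is_ray_def by blast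
  have step: "t (Suc n) = t n + 1 \<or> t n = t (Suc n) + 1" for n
    using adj_ht[OF ray_s_adj[OF s]] by (simp add: t_def)
  have persist: "t (Suc (Suc n)) = t (Suc n) + 1" if "t (Suc n) = t n + 1" for n
  proof (rule ccontr)
    assume "t (Suc (Suc n)) \<noteq> t (Suc n) + 1"
    then have h2: "t (Suc n) = t (Suc (Suc n)) + 1" using step[of "Suc n"] by simp
    have a1: "adj (s (Suc n)) (s n)" using adj_symm[OF ray_s_adj[OF s, of n]] .
    have a2: "adj (s (Suc n)) (s (Suc (Suc n)))" using ray_s_adj[OF s] .
    have e1: "ht (s n) = ht (s (Suc n)) - 1" using that by (simp add: t_def)
    have e2: "ht (s (Suc (Suc n))) = ht (s (Suc n)) - 1" using h2 by (simp add: t_def)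
    have "s n = s (Suc (Suc n))" by (rule parent_unique[OF a1 a2 e1 e2])
    then show False using ray_ne2[OF s] by blast
  qed
  show ?thesis
  proof (cases "\<exists>N. t (Suc N) = t N + 1")
    case False
    then have down: "t (Suc n) = t n - 1" for n using step[of n] by force
    obtain n0 z0 where s0: "s 0 = vx n0 z0" using V_cases[OF sV] by blast
    have sn: "s n = vx (n0 - int n) z0" for n
    proof (induction n)
      case 0 then show ?case using s0 by simp
    next
      case (Suc n)
      have a: "adj (vx (n0 - int n) z0) (s (Suc n))" using ray_s_adj[OF s, of n] Suc by simp
      have "ht (s (Suc n)) = n0 - int n - 1" using down[of n] Suc by (simp add: t_def)
      then have "s (Suc n) = vx (n0 - int n - 1) z0" using adj_parent[OF a] by simp
      moreover have "n0 - int n - 1 = n0 - int (Suc n)" by simp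
      ultimately show ?case by metis
    qed
    define M where "M = nat (max n0 (n0 - v z0))"
    have M1: "int M \<ge> n0" "int M \<ge> n0 - v z0" by (auto simp: M_def)
    define A where "A = nat (int M - n0)"
    have "rr (i + A) = s (i + M)" for i
    proof -
      have "s (i + M) = vx (n0 - int (i + M)) 0" using sn M1 by (simp add: vx_eq_iff dvp_def)
      also have "\<dots> = rr (i + A)" using M1 by (simp add: rr_def A_def vx_eq_iff)
      finally show ?thesis by simp
    qed
    then show ?thesis unfolding ray_equiv_def by blast
  next
    case True
    then obtain N where N: "t (Suc N) = t N + 1" by blast
    have up: "t (Suc (N + m)) = t (N + m) + 1" for m
    proof (induction m)
      case 0 then show ?case using N by simp
    next
      case (Suc m) then show ?case using persist[of "N + m"] by simp
    qed
    define c where "c = t N"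
    have tN: "t (N + m) = c + int m" for m
      by (induction m) (auto simp: c_def up)
    define Z where "Z m = (SOME z. s (N + m) = vx (c + int m) z)" for m
    have sZ: "s (N + m) = vx (c + int m) (Z m)" for m
    proof -
      obtain n z where "s (N + m) = vx n z" using V_cases[OF sV] by blast
      moreover then have "n = c + int m" using tN[of m] by (simp add: t_def)
      ultimately have "\<exists>z. s (N + m) = vx (c + int m) z" by blast
      then show ?thesis unfolding Z_def by (rule someI_ex)
    qed
    have zstep: "dvp (c + int m) (Z (Suc m) - Z m)" for m
    proof -
      have "adj (vx (c + int m) (Z m)) (vx (c + int (Suc m)) (Z (Suc m)))"
        using ray_s_adj[OF s, of "N + m"] sZ[of m] sZ[of "Suc m"] by simp
      then show ?thesis unfolding adj_iff by auto
    qed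
    have zchain: "dvp (c + int m) (Z (m + j) - Z m)" for m j
    proof (induction j)
      case 0 then show ?case by simp
    next
      case (Suc j)
      have "dvp (c + int (m + j)) (Z (Suc (m + j)) - Z (m + j))" by (rule zstep)
      then have "dvp (c + int m) (Z (Suc (m + j)) - Z (m + j))" by (rule dvp_mono) simp
      then have "dvp (c + int m) ((Z (Suc (m + j)) - Z (m + j)) + (Z (m + j) - Z m))"
        using Suc dvp_add by blast
      then show ?case by simp
    qed
    have key: "\<exists>p q. int p = int q + v (\<chi> g) \<and>
       (\<forall>m. dvp (c + int p + int m) (Z (p + m) - (\<chi> g * Z (q + m) + \<theta> g)))"
      if g: "g \<in> carrier G" for g
    proof -
      obtain a b where ab: "\<And>i. s (i + a) = (act g \<circ> s) (i + b)"
        using inv[OF g] unfolding ray_equiv_def by blast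
      have eq: "vx (c + int (m + a)) (Z (m + a)) = vx (c + int (m + b) + v (\<chi> g)) (\<chi> g * Z (m + b) + \<theta> g)" for m
        using ab[of "N + m"] sZ[of "m + a"] sZ[of "m + b"] act_vx[OF g]
        by (simp add: add.assoc add.commute add.left_commute)
      have ht_eq: "int a = int b + v (\<chi> g)" using eq[of 0] by (simp add: vx_eq_iff)
      have "dvp (c + int a + int m) (Z (a + m) - (\<chi> g * Z (b + m) + \<theta> g))" for m
      proof -
        have "dvp (c + int (m + a)) (Z (m + a) - (\<chi> g * Z (m + b) + \<theta> g))"
          using eq[of m] unfolding vx_eq_iff by (elim conjE)
        moreover have "c + int (m + a) = c + int a + int m" "m + a = a + m" "m + b = b + m" by simp_all
        ultimately show ?thesis by metis
      qed
      then show ?thesis using ht_eq by blast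
    qed
    obtain g where g: "g \<in> carrier G" "v (\<chi> g) > 0" using pos_g by blast
    define k where "k = v (\<chi> g)"
    have cn: "\<chi> g \<noteq> 0" using chi_nz[OF g(1)] .
    have om: "1 - \<chi> g \<noteq> 0" "v (1 - \<chi> g) = 0" using v_one_minus[OF cn g(2)] by auto
    define zg where "zg = \<theta> g / (1 - \<chi> g)"
    have zg1: "(1 - \<chi> g) * zg = \<theta> g" using om(1) by (simp add: zg_def)
    have "zg - \<chi> g * zg - \<theta> g = (1 - \<chi> g) * zg - \<theta> g" by (simp add: algebra_simps)
    then have zgfix: "zg - \<chi> g * zg - \<theta> g = 0" using zg1 by simp
    obtain p q where pq: "int p = int q + k"
      "\<And>m. dvp (c + int p + int m) (Z (p + m) - (\<chi> g * Z (q + m) + \<theta> g))"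
      using key[OF g(1)] unfolding k_def by blast
    have pq2: "p = q + nat k" using pq(1) g(2) k_def by simp
    have close: "dvp (c + int m') (Z m' - zg)" if m': "m' \<ge> q" for m'
    proof -
      obtain m where m: "m' = q + m" using m' le_Suc_ex by blast
      define u where "u j = Z j - zg" for j
      have d1: "dvp (c + int (q + m)) (u (p + m) - u (q + m))"
        using zchain[of "q + m" "nat k"] pq2 by (simp add: u_def add.commute add.left_commute)
      have e: "Z (p + m) - (\<chi> g * Z (q + m) + \<theta> g) = u (p + m) - \<chi> g * u (q + m)"
        using zgfix by (simp add: u_def algebra_simps)
      have "dvp (c + int p + int m) (u (p + m) - \<chi> g * u (q + m))" using pq(2)[of m] e by simp
      then have d2: "dvp (c + int (q + m)) (u (p + m) - \<chi> g * u (q + m))"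
        by (rule dvp_mono) (use pq(1) g(2) k_def in simp)
      have "(1 - \<chi> g) * u (q + m) = (u (p + m) - \<chi> g * u (q + m)) - (u (p + m) - u (q + m))"
        by (simp add: algebra_simps)
      then have "dvp (c + int (q + m)) ((1 - \<chi> g) * u (q + m))" using dvp_diff[OF d2 d1] by simp
      then have "dvp (c + int (q + m)) (u (q + m))" using om by (simp add: dvp_mult_iff)
      then show ?thesis using m by (simp add: u_def)
    qed
    have "\<theta> h = (- zg) * (\<chi> h - 1)" if h: "h \<in> carrier G" for h
    proof -
      obtain p' q' where pq': "int p' = int q' + v (\<chi> h)"
        "\<And>m. dvp (c + int p' + int m) (Z (p' + m) - (\<chi> h * Z (q' + m) + \<theta> h))"
        using key[OF h] by blast
      have hn: "\<chi> h \<noteq> 0" using chi_nz[OF h] .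
      define E where "E = zg - \<chi> h * zg - \<theta> h"
      have Em: "dvp (c + int p' + int m) E" if m: "m \<ge> q" for m
      proof -
        have d1: "dvp (c + int p' + int m) (Z (p' + m) - (\<chi> h * Z (q' + m) + \<theta> h))" by (rule pq'(2))
        have d2: "dvp (c + int p' + int m) (Z (p' + m) - zg)"
          using close[of "p' + m"] m by (simp add: add.assoc)
        have "dvp (c + int (q' + m)) (Z (q' + m) - zg)" using close[of "q' + m"] m by simp
        then have d3: "dvp (c + int p' + int m) (\<chi> h * (Z (q' + m) - zg))"
          using hn pq'(1) by (simp add: dvp_mult_iff add.commute add.left_commute)
        have "- E = (Z (p' + m) - zg) - (Z (p' + m) - (\<chi> h * Z (q' + m) + \<theta> h)) - \<chi> h * (Z (q' + m) - zg)"
          by (simp add: E_def algebra_simps)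
        then have "dvp (c + int p' + int m) (- E)" using dvp_diff[OF dvp_diff[OF d2 d1] d3] by simp
        then show ?thesis by simp
      qed
      then have "dvp n E" for n
      proof -
        define m where "m = max q (nat (n - c - int p'))"
        have "dvp (c + int p' + int m) E" using Em[of m] by (simp add: m_def)
        then show ?thesis by (rule dvp_mono) (simp add: m_def)
      qed
      then have "E = 0" by (rule dvp_all)
      then show ?thesis by (simp add: E_def algebra_simps)
    qed
    then have "coboundary1 G \<chi> \<theta>" unfolding coboundary1_def by blast
    then show ?thesis using nc by blast
  qed
qed

lemma ray_class_eq: "ray_equiv r r' \<Longrightarrow> ray_class V adj r = ray_class V adj r'"
  unfolding ray_class_def using ray_equiv_trans ray_equiv_sym by blast

lemma fixed_unique:
  assumes "\<alpha> \<in> tree_boundary V adj" "\<forall>g\<in>carrier G. boundary_act (act g) \<alpha> = \<alpha>"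
  shows "\<alpha> = ray_class V adj rr"
proof -
  obtain s where s: "is_ray V adj s" "\<alpha> = ray_class V adj s"
    using assms(1) unfolding tree_boundary_def by blast
  have sa: "s \<in> \<alpha>" using s ray_equiv_refl unfolding ray_class_def by blast
  have "ray_equiv s (act g \<circ> s)" if g: "g \<in> carrier G" for g
  proof -
    have "act g \<circ> s \<in> boundary_act (act g) \<alpha>" using sa unfolding boundary_act_def by blast
    then have "act g \<circ> s \<in> \<alpha>" using assms(2) g by blast
    then show ?thesis using s(2) unfolding ray_class_def by blast
  qed
  then have "ray_equiv rr s" using main_unique[OF s(1)] by blast
  then show ?thesis using s(2) ray_class_eq by simp
qed

lemma busemann_shift:
  assumes "\<And>i. r' (i + b) = f i" "\<And>i. i \<ge> N \<Longrightarrow> real (gdist adj x (f i)) = real i + c"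
  shows "busemann adj r' x = c - real b"
proof -
  have "real (gdist adj x (r' n)) - real n = c - real b" if "n \<ge> N + b" for n
  proof -
    define i where "i = n - b"
    have i: "n = i + b" "i \<ge> N" using that by (simp_all add: i_def)
    show ?thesis using assms(1)[of i] assms(2)[OF i(2)] i(1) by simp
  qed
  then show ?thesis unfolding busemann_def by (rule lim_eventually_const)
qed

lemma busemann_nontriv:
  assumes r': "r' \<in> ray_class V adj rr"
  shows "\<exists>g\<in>carrier G. busemann_cocycle V adj act r' g \<noteq> (\<lambda>x\<in>V. 0)"
proof -
  obtain g where g: "g \<in> carrier G" "v (\<chi> g) \<noteq> 0" using hv by blast
  obtain a b where ab: "\<And>i. rr (i + a) = r' (i + b)" using r' unfolding ray_class_def ray_equiv_def by blast
  obtain A B where AB: "\<And>i. rr (i + A) = act g (rr (i + B))" "int A = int B - v (\<chi> g)"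
    using act_rr_equiv[OF g(1)] by blast
  have dr: "gdist adj (rr m) (rr n) = nat \<bar>int m - int n\<bar>" for m n
    using rr_ray unfolding is_ray_def by (metis nat_int)
  have b1: "busemann adj r' (rr 0) = real a - real b"
  proof -
    have "real (gdist adj (rr 0) (rr (i + a))) = real i + real a" for i using dr[of 0 "i + a"] by simp
    then show ?thesis using busemann_shift[of r' b "\<lambda>i. rr (i + a)" 0 "rr 0" "real a"] ab by simp
  qed
  have b2: "busemann adj r' (act g (rr 0)) = real a - real b + v (\<chi> g)"
  proof -
    have "real (gdist adj (act g (rr 0)) (rr (i + a))) = real i + (real a - real A + real B)" if i: "i \<ge> A" for i
    proof -
      obtain j where j: "i = j + A" using i le_Suc_ex by (metis add.commute)
      have "rr (i + a) = act g (rr (j + a + B))" using AB(1)[of "j + a"] j by (simp add: add.commute add.left_commute)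
      then have "gdist adj (act g (rr 0)) (rr (i + a)) = gdist adj (rr 0) (rr (j + a + B))"
        using act_isom[OF g(1)] by (simp add: rr_def)
      also have "\<dots> = j + a + B" using dr[of 0 "j + a + B"] by simp
      finally show ?thesis using j by simp
    qed
    then have "busemann adj r' (act g (rr 0)) = (real a - real A + real B) - real b"
      using busemann_shift[of r' b "\<lambda>i. rr (i + a)" A "act g (rr 0)" "real a - real A + real B"] ab by simp
    moreover have "real A = real B - v (\<chi> g)" using AB(2) by linarith
    ultimately show ?thesis by simp
  qed
  have c1: "busemann_cocycle V adj act r' g (rr 0) = v (\<chi> g)"
    unfolding busemann_cocycle_def using b1 b2 by (simp add: rr_def)
  have c2: "(\<lambda>x\<in>V. 0::real) (rr 0) = 0" by (simp add: rr_def)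
  have "busemann_cocycle V adj act r' g \<noteq> (\<lambda>x\<in>V. 0)"
  proof
    assume "busemann_cocycle V adj act r' g = (\<lambda>x\<in>V. 0)"
    then have "real_of_int (v (\<chi> g)) = 0" using c1 c2 by metis
    then show False using g(2) by simp
  qed
  then show ?thesis by (rule bexI[OF _ g(1)])
qed

lemma exceptional: "exceptional_action G V adj act"
  unfolding exceptional_action_def
proof (intro conjI allI impI)
  show "\<exists>!\<alpha>. \<alpha> \<in> tree_boundary V adj \<and> (\<forall>g\<in>carrier G. boundary_act (act g) \<alpha> = \<alpha>)"
  proof (rule ex1I[of _ "ray_class V adj rr"])
    show "ray_class V adj rr \<in> tree_boundary V adj \<and> (\<forall>g\<in>carrier G. boundary_act (act g) (ray_class V adj rr) = ray_class V adj rr)"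
      using rr_in_boundary rr_fixed by simp
  next
    fix \<alpha> assume "\<alpha> \<in> tree_boundary V adj \<and> (\<forall>g\<in>carrier G. boundary_act (act g) \<alpha> = \<alpha>)"
    then show "\<alpha> = ray_class V adj rr" using fixed_unique by (elim conjE)
  qed
next
  fix \<alpha> r'
  assume h: "\<alpha> \<in> tree_boundary V adj \<and> (\<forall>g\<in>carrier G. boundary_act (act g) \<alpha> = \<alpha>) \<and> r' \<in> \<alpha>"
  then have "\<alpha> = ray_class V adj rr" using fixed_unique by (elim conjE)
  then have "r' \<in> ray_class V adj rr" using h by simp
  then show "\<exists>g\<in>carrier G. busemann_cocycle V adj act r' g \<noteq> (\<lambda>x\<in>V. 0)"
    by (rule busemann_nontriv)
qed

end


theorem proposition6:
  fixes v :: "'k::field \<Rightarrow> int"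
    and G :: "('g, 'b) monoid_scheme"
    and \<chi> \<theta> :: "'g \<Rightarrow> 'k"
  assumes "discrete_valuation v"
    and "finitely_generated_group G"
    and "\<chi> \<in> E1 G"
    and "cocycle1 G \<chi> \<theta>"
    and "\<not> coboundary1 G \<chi> \<theta>"
    and "\<exists>g\<in>carrier G. v (\<chi> g) \<noteq> 0"
  shows "exceptional_action G (bt_vertices v) (bt_adj v)
           (\<lambda>g. gl_vertex_act (affine_rep \<chi> \<theta> g))"
proof -
  have h2: "group G" using assms(2) unfolding finitely_generated_group_def by blast
  have h3: "character G \<chi>" using assms(3) unfolding E1_def by blast
  interpret S: setting2 v G \<chi> \<theta>
    using assms(1,4,5,6) h2 h3
    by (simp add: setting2_def setting_def setting2_axioms_def setting_axioms_def dval_def)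
  have "S.act = (\<lambda>g. gl_vertex_act (affine_rep \<chi> \<theta> g))" by (rule ext) (simp add: S.act_def)
  then show ?thesis using S.exceptional by simp
qed


end
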